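(* For all $v$ (for which the norms are defined), $$\alpha^{3/2}\|v\|_X\le\alpha\|v\|_{X^{(\mathbf{C})}}\le\|v\|_{X^{(\mathbf{C}^2)}}\le\|v\|_{X^{(\gamma\mathbf{C})}}\le\|v\|_{X^{(\gamma^2)}},$$ and therefore $X^{(\gamma^2)}\subset X^{(\gamma\mathbf{C})}\subset X^{(\mathbf{C}^2)}\subset X^{(\mathbf{C})}\subset X$, with dense embeddings.
   Context: $D\subset\mathbb{R}^d$ bounded open with smooth boundary; $\Gamma=\Gamma_{N_g}\otimes\Gamma_\nu$ a product probability measure on $\mathbb{R}^\mu=\mathbb{R}^{N_g}\times\mathbb{R}^\nu$, $E_\Gamma$ the integral with respect to $\Gamma$. $[\mathrm{C}]:D\times\mathbb{R}^\mu\to\mathbb{M}_n^+(\mathbb{R})$ is measurable (in the paper, the parameterized random field coefficient $\mathcal{K}^{(m,N)}(\mathbf{x},\mathbf{y},\mathcal{M}_{[a]}(\mathbf{z}))$), and there are a constant $\alpha>0$ and a positive measurable function $\gamma$ on $\mathbb{R}^\mu$ such that for $\Gamma$-a.e. $(\mathbf{y},\mathbf{z})$ and a.e. $\mathbf{x}$, all eigenvalues of $[\mathrm{C}](\mathbf{x},\mathbf{y},\mathbf{z})$ lie in $[\alpha,\gamma(\mathbf{y},\mathbf{z})]$, with $\gamma<\infty$. $X=H^1_0(D)\otimes L^2_\Gamma(\mathbb{R}^\mu)$ with norm $\|v\|_X^2=E_\Gamma(\int_D\|\nabla v\|_2^2d\mathbf{x})$. For integers $s,r\ge0$, $X^{(\gamma^s\mathbf{C}^r)}$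 is the space of functions $v:D\times\mathbb{R}^\mu\to\mathbb{R}$ with finite norm $\|v\|_{X^{(\gamma^s\mathbf{C}^r)}}=\{E_\Gamma(\gamma^s\int_D\nabla v\cdot[\mathrm{C}]^r\nabla v\,d\mathbf{x})\}^{1/2}$; e.g. $X^{(\mathbf{C})}$ ($s=0,r=1$), $X^{(\mathbf{C}^2)}$, $X^{(\gamma\mathbf{C})}$, $X^{(\gamma^2)}$ ($s=2,r=0$).
   Formalization: The lower eigenvalue bound $\alpha$ of [C] is also required to satisfy $\alpha \le 1$, besides $\alpha > 0$, for the whole inequality chain and the dense embeddings. The statement above fails without it. *)

theory Defs
  imports "HOL-Probability.Probability"
begin

definition testfn :: "(real^'d) set \<Rightarrow> (real^'d \<Rightarrow> real) \<Rightarrow> (real^'d \<Rightarrow> real^'d) \<Rightarrow> bool" where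
  "testfn D phi gphi \<longleftrightarrow>
     (\<forall>x. GDERIV phi x :> gphi x) \<and> continuous_on UNIV gphi \<and>
     compact (closure {x. phi x \<noteq> 0}) \<and> closure {x. phi x \<noteq> 0} \<subseteq> D"

definition weak_grad :: "(real^'d) set \<Rightarrow> (real^'d \<Rightarrow> real) \<Rightarrow> (real^'d \<Rightarrow> real^'d) \<Rightarrow> bool" where
  "weak_grad D f g \<longleftrightarrow>
     (\<forall>phi gphi. testfn D phi gphi \<longrightarrow>
        (\<forall>i. (LINT x:D|lborel. f x * (gphi x $ i)) = - (LINT x:D|lborel. (g x $ i) * phi x)))"

definition H1 :: "(real^'d) set \<Rightarrow> (real^'d \<Rightarrow> real) \<Rightarrow> (real^'d \<Rightarrow> real^'d) \<Rightarrow> bool" where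
  "H1 D f g \<longleftrightarrow> f \<in> borel_measurable lborel \<and> g \<in> borel_measurable lborel \<and>
     set_integrable lborel D (\<lambda>x. (f x)\<^sup>2) \<and> set_integrable lborel D (\<lambda>x. (norm (g x))\<^sup>2) \<and>
     weak_grad D f g"

text \<open>The weak gradient of f (unique a.e. when it exists).\<close>
definition grad :: "(real^'d) set \<Rightarrow> (real^'d \<Rightarrow> real) \<Rightarrow> real^'d \<Rightarrow> real^'d" where
  "grad D f = (SOME g. H1 D f g)"

definition H10 :: "(real^'d) set \<Rightarrow> (real^'d \<Rightarrow> real) \<Rightarrow> bool" where
  "H10 D f \<longleftrightarrow> (\<exists>g. H1 D f g \<and>
     (\<exists>phis gphis. (\<forall>k. testfn D (phis k) (gphis k)) \<and>
        (\<lambda>k. LINT x:D|lborel. (phis k x - f x)\<^sup>2 + (norm (gphis k x - g x))\<^sup>2)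
          \<longlonglongrightarrow> 0))"

primrec mpow :: "real^'n^'n \<Rightarrow> nat \<Rightarrow> real^'n^'n" where
  "mpow A 0 = mat 1"
| "mpow A (Suc r) = A ** mpow A r"

definition is_eigenvalue :: "real^'n^'n \<Rightarrow> real \<Rightarrow> bool" where
  "is_eigenvalue A l \<longleftrightarrow> (\<exists>x. x \<noteq> 0 \<and> A *v x = l *\<^sub>R x)"

definition sym_posdef :: "real^'n^'n \<Rightarrow> bool" where
  "sym_posdef A \<longleftrightarrow> transpose A = A \<and> (\<forall>x. x \<noteq> 0 \<longrightarrow> x \<bullet> (A *v x) > 0)"

text \<open>v : D x R^mu -> R "for which the norms are defined": jointly measurable, and for
  Gamma-a.e. w, v(.,w) in H^1_0(D) with a jointly measurable weak gradient field.\<close>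
definition admissible :: "(real^'d) set \<Rightarrow> 'w measure \<Rightarrow> (real^'d \<Rightarrow> 'w \<Rightarrow> real) \<Rightarrow> bool" where
  "admissible D Gam v \<longleftrightarrow>
     (\<lambda>(x, w). v x w) \<in> borel_measurable (lborel \<Otimes>\<^sub>M Gam) \<and>
     (\<exists>G. (\<lambda>(x, w). G x w) \<in> borel_measurable (lborel \<Otimes>\<^sub>M Gam) \<and>
          (AE w in Gam. H10 D (\<lambda>x. v x w) \<and> H1 D (\<lambda>x. v x w) (\<lambda>x. G x w)))"

definition Xsq :: "(real^'d) set \<Rightarrow> 'w measure \<Rightarrow> (real^'d \<Rightarrow> 'w \<Rightarrow> real^'d^'d) \<Rightarrow> ('w \<Rightarrow> real)
    \<Rightarrow> nat \<Rightarrow> nat \<Rightarrow> (real^'d \<Rightarrow> 'w \<Rightarrow> real) \<Rightarrow> ennreal" where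
  "Xsq D Gam C gam s r v =
     (\<integral>\<^sup>+ w. ennreal (gam w ^ s) *
        (\<integral>\<^sup>+ x\<in>D. ennreal (grad D (\<lambda>x. v x w) x \<bullet> (mpow (C x w) r *v grad D (\<lambda>x. v x w) x)) \<partial>lborel)
      \<partial>Gam)"

definition Xnorm :: "(real^'d) set \<Rightarrow> 'w measure \<Rightarrow> (real^'d \<Rightarrow> 'w \<Rightarrow> real^'d^'d) \<Rightarrow> ('w \<Rightarrow> real)
    \<Rightarrow> nat \<Rightarrow> nat \<Rightarrow> (real^'d \<Rightarrow> 'w \<Rightarrow> real) \<Rightarrow> ennreal" where
  "Xnorm D Gam C gam s r v =
     (if Xsq D Gam C gam s r v = \<infinity> then \<infinity> else ennreal (sqrt (enn2real (Xsq D Gam C gam s r v))))"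

definition Xspace :: "(real^'d) set \<Rightarrow> 'w measure \<Rightarrow> (real^'d \<Rightarrow> 'w \<Rightarrow> real^'d^'d) \<Rightarrow> ('w \<Rightarrow> real)
    \<Rightarrow> nat \<Rightarrow> nat \<Rightarrow> (real^'d \<Rightarrow> 'w \<Rightarrow> real) set" where
  "Xspace D Gam C gam s r = {v. admissible D Gam v \<and> Xnorm D Gam C gam s r v < \<infinity>}"

definition dense_embedded :: "(real^'d) set \<Rightarrow> 'w measure \<Rightarrow> (real^'d \<Rightarrow> 'w \<Rightarrow> real^'d^'d) \<Rightarrow> ('w \<Rightarrow> real)
    \<Rightarrow> (real^'d \<Rightarrow> 'w \<Rightarrow> real) set \<Rightarrow> nat \<Rightarrow> nat \<Rightarrow> bool" where
  "dense_embedded D Gam C gam A s r \<longleftrightarrow>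
     A \<subseteq> Xspace D Gam C gam s r \<and>
     (\<forall>v \<in> Xspace D Gam C gam s r. \<forall>e>0. \<exists>u\<in>A.
        Xnorm D Gam C gam s r (\<lambda>x w. v x w - u x w) < ennreal e)"

end

theory Submission
  imports Defs
begin

lemma sym_dot:
  fixes A :: "real^'n^'n"
  assumes "transpose A = A"
  shows "x \<bullet> (A *v y) = (A *v x) \<bullet> y"
proof -
  have "x \<bullet> (A *v y) = (x v* A) \<bullet> y" by (simp add: dot_lmul_matrix)
  also have "x v* A = transpose A *v x" by (simp add: transpose_matrix_vector)
  finally show ?thesis using assms by simp
qed

lemma quad_min:
  fixes A :: "real^'n^'n"
  assumes sym: "transpose A = A" and ev: "\<And>l. is_eigenvalue A l \<Longrightarrow> a \<le> l"
  shows "a * (x \<bullet> x) \<le> x \<bullet> (A *v x)"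
proof -
  let ?q = "\<lambda>x. x \<bullet> (A *v x)"
  have cq: "continuous_on UNIV ?q"
    by (intro continuous_intros linear_continuous_on matrix_vector_mul_linear)
  have "compact (sphere (0::real^'n) 1)" by simp
  moreover have "sphere (0::real^'n) 1 \<noteq> {}" by simp
  ultimately obtain x0 where x0: "x0 \<in> sphere 0 1" and min: "\<And>y. y \<in> sphere 0 1 \<Longrightarrow> ?q x0 \<le> ?q y"
    using continuous_attains_inf[of "sphere 0 1" ?q] continuous_on_subset[OF cq] by blast
  define m where "m = ?q x0"
  have x0n: "x0 \<bullet> x0 = 1" using x0 by (simp add: dot_square_norm)
  have hom: "?q (c *\<^sub>R y) = c^2 * ?q y" for c y
    by (simp add: matrix_vector_mult_scaleR power2_eq_square)
  have all: "m * (y \<bullet> y) \<le> ?q y" for y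
  proof (cases "y = 0")
    case True then show ?thesis by simp
  next
    case False
    let ?u = "(1 / norm y) *\<^sub>R y"
    have "?u \<in> sphere 0 1" using False by simp
    then have "m \<le> ?q ?u" using min m_def by blast
    also have "?q ?u = (1/norm y)^2 * ?q y" by (rule hom)
    finally have "m * (norm y)^2 \<le> ?q y" using False
      by (simp add: field_simps power2_eq_square)
    then show ?thesis by (simp add: dot_square_norm)
  qed
  let ?B = "\<lambda>y. A *v y - m *\<^sub>R y"
  have psd: "0 \<le> y \<bullet> ?B y" for y using all[of y] by (simp add: inner_diff_right)
  have z0: "x0 \<bullet> ?B x0 = 0" using x0n m_def by (simp add: inner_diff_right)
  have Bsym: "x \<bullet> ?B y = y \<bullet> ?B x" for x y
    using sym_dot[OF sym, of x y] by (simp add: inner_diff_right inner_commute)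
  have Blin: "?B (x + t *\<^sub>R y) = ?B x + t *\<^sub>R ?B y" for x y t
    by (simp add: matrix_vector_right_distrib matrix_vector_mult_scaleR algebra_simps)
  have key: "0 \<le> 2 * t * (y \<bullet> ?B x0) + t^2 * (y \<bullet> ?B y)" for y t
  proof -
    have "0 \<le> (x0 + t *\<^sub>R y) \<bullet> ?B (x0 + t *\<^sub>R y)" by (rule psd)
    also have "\<dots> = x0 \<bullet> ?B x0 + t * (x0 \<bullet> ?B y) + t * (y \<bullet> ?B x0) + t^2 * (y \<bullet> ?B y)"
      unfolding Blin by (simp add: inner_add_left inner_add_right power2_eq_square algebra_simps)
    also have "\<dots> = 2 * t * (y \<bullet> ?B x0) + t^2 * (y \<bullet> ?B y)"
      using z0 Bsym[of x0 y] by simp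
    finally show ?thesis .
  qed
  define v where "v = ?B x0"
  define N where "N = v \<bullet> v"
  define c where "c = v \<bullet> ?B v"
  have c0: "0 \<le> c" using psd c_def by simp
  have N0: "0 \<le> N" using N_def by simp
  have "N = 0"
  proof (rule ccontr)
    assume "N \<noteq> 0"
    then have Np: "0 < N" using N0 by simp
    define z where "z = N / (c+1)"
    have zpos: "0 < z" using Np c0 unfolding z_def by simp
    have zc1: "z * (c + 1) = N" using c0 unfolding z_def by simp
    have "0 \<le> 2 * (-z) * N + (-z)^2 * c"
      using key[of "-z" v] unfolding v_def[symmetric] N_def c_def by simp
    have zc: "z * c = N - z" using zc1 by (simp add: algebra_simps)
    have e1: "(-z)^2 * c = z * (z * c)" by (simp add: power2_eq_square mult.assoc)
    have e2: "z * (N - z) = z * N - z * z" by (simp add: right_diff_distrib)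
    have e3: "2 * (-z) * N = -2 * (z * N)" by simp
    have "0 < z * N" using zpos Np by simp
    moreover have "0 < z * z" using zpos by simp
    moreover have e4: "z * (z * c) = z * (N - z)" by (simp add: zc)
    ultimately show False using \<open>0 \<le> 2 * (-z) * N + (-z)^2 * c\<close> e1 e2 e3 by linarith
  qed
  then have "v = 0" using N_def by simp
  then have "A *v x0 = m *\<^sub>R x0" using v_def by simp
  moreover have "x0 \<noteq> 0" using x0 by auto
  ultimately have "is_eigenvalue A m" unfolding is_eigenvalue_def by blast
  then have "a \<le> m" by (rule ev)
  then have "a * (x \<bullet> x) \<le> m * (x \<bullet> x)" by (simp add: mult_right_mono)
  with all[of x] show ?thesis by simp
qed

lemma quad_max:
  fixes A :: "real^'n^'n"
  assumes sym: "transpose A = A" and ev: "\<And>l. is_eigenvalue A l \<Longrightarrow> l \<le> g"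
  shows "x \<bullet> (A *v x) \<le> g * (x \<bullet> x)"
proof -
  have neg: "(- A) *v y = - (A *v y)" for y
    by (simp add: matrix_vector_mult_def vec_eq_iff sum_negf)
  have "transpose (- A) = - A" using sym
    by (simp add: transpose_def vec_eq_iff)
  moreover have "is_eigenvalue (- A) l \<Longrightarrow> - g \<le> l" for l
  proof -
    assume "is_eigenvalue (- A) l"
    then obtain y where "y \<noteq> 0" and yl: "(- A) *v y = l *\<^sub>R y" unfolding is_eigenvalue_def by blast
    have e: "- (A *v y) = l *\<^sub>R y" using neg[of y] yl by simp
    have "A *v y = - (l *\<^sub>R y)" using arg_cong[OF e, of uminus] by simp
    then have "A *v y = (- l) *\<^sub>R y" by simp
    then have "is_eigenvalue A (- l)" using \<open>y \<noteq> 0\<close> unfolding is_eigenvalue_def by blast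
    then show ?thesis using ev by fastforce
  qed
  ultimately have "- g * (x \<bullet> x) \<le> x \<bullet> ((- A) *v x)" by (rule quad_min)
  then show ?thesis using neg by simp
qed

lemma quad_ineqs:
  fixes A :: "real^'n^'n"
  assumes sym: "transpose A = A" and ev: "\<And>l. is_eigenvalue A l \<Longrightarrow> a \<le> l \<and> l \<le> g"
    and a: "0 < a" "a \<le> 1"
  shows "a^3 * (x \<bullet> x) \<le> a^2 * (x \<bullet> (A *v x))"
    and "a^2 * (x \<bullet> (A *v x)) \<le> x \<bullet> ((A ** A) *v x)"
    and "x \<bullet> ((A ** A) *v x) \<le> g * (x \<bullet> (A *v x))"
    and "g * (x \<bullet> (A *v x)) \<le> g^2 * (x \<bullet> x)"
    and "a * (x \<bullet> x) \<le> x \<bullet> (A *v x)"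
    and "a * (x \<bullet> (A *v x)) \<le> x \<bullet> ((A ** A) *v x)"
    and "x \<bullet> (A *v x) \<le> g * (x \<bullet> x)"
    and "0 \<le> x \<bullet> (A *v x)"
proof -
  have i: "a * (y \<bullet> y) \<le> y \<bullet> (A *v y)" for y using quad_min[OF sym] ev by blast
  have iv: "y \<bullet> (A *v y) \<le> g * (y \<bullet> y)" for y using quad_max[OF sym] ev by blast
  have AA: "x \<bullet> ((A ** A) *v x) = (A *v x) \<bullet> (A *v x)"
    by (simp add: matrix_vector_mul_assoc[symmetric] sym_dot[OF sym])
  have nn: "0 \<le> y \<bullet> (A *v y)" for y
    using i[of y] a by (smt (verit) inner_ge_zero mult_nonneg_nonneg)
  show "a * (x \<bullet> x) \<le> x \<bullet> (A *v x)" by (rule i)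
  show "x \<bullet> (A *v x) \<le> g * (x \<bullet> x)" by (rule iv)
  show "0 \<le> x \<bullet> (A *v x)" by (rule nn)
  show "a^3 * (x \<bullet> x) \<le> a^2 * (x \<bullet> (A *v x))"
    using mult_left_mono[OF i[of x], of "a^2"] a by (simp add: power3_eq_cube power2_eq_square algebra_simps)
  let ?y = "A *v x"
  have ii: "a * (x \<bullet> ?y) \<le> ?y \<bullet> ?y"
  proof -
    have "?y \<bullet> ?y - a * (x \<bullet> ?y) = (?y - a *\<^sub>R x) \<bullet> (?y - a *\<^sub>R x) + a * (x \<bullet> ?y - a * (x \<bullet> x))"
      by (simp add: inner_diff_left inner_diff_right inner_commute algebra_simps)
    moreover have "0 \<le> a * (x \<bullet> ?y - a * (x \<bullet> x))" using i[of x] a by simp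
    ultimately show ?thesis by (smt (verit) inner_ge_zero)
  qed
  show "a * (x \<bullet> (A *v x)) \<le> x \<bullet> ((A ** A) *v x)" using ii AA by simp
  show "a^2 * (x \<bullet> (A *v x)) \<le> x \<bullet> ((A ** A) *v x)"
  proof -
    have "a^2 * (x \<bullet> ?y) \<le> a * (x \<bullet> ?y)" using a nn[of x]
      by (simp add: power2_eq_square mult_right_le_one_le mult_le_cancel_right1 mult_right_mono)
    then show ?thesis using ii AA by simp
  qed
  have g0: "0 < g"
  proof -
    obtain k :: 'n where True by simp
    let ?e = "axis k (1::real)"
    have e1: "?e \<bullet> ?e = 1" by (simp add: inner_axis_axis)
    have "a \<le> g" using i[of ?e] iv[of ?e] e1 by simp
    then show ?thesis using a by simp
  qed
  show iii: "x \<bullet> ((A ** A) *v x) \<le> g * (x \<bullet> (A *v x))"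
  proof -
    let ?t = "- 1 / g"
    have "0 \<le> (x + ?t *\<^sub>R ?y) \<bullet> (A *v (x + ?t *\<^sub>R ?y))" by (rule nn)
    also have "\<dots> = x \<bullet> ?y + 2 * ?t * (?y \<bullet> ?y) + ?t^2 * (?y \<bullet> (A *v ?y))"
      using sym_dot[OF sym, of ?y x]
      by (simp add: matrix_vector_right_distrib matrix_vector_mult_scaleR inner_add_left inner_add_right
          power2_eq_square algebra_simps inner_commute)
    also have "\<dots> \<le> x \<bullet> ?y + 2 * ?t * (?y \<bullet> ?y) + ?t^2 * (g * (?y \<bullet> ?y))"
      using iv[of ?y] by (simp add: mult_left_mono)
    also have "\<dots> = x \<bullet> ?y - (?y \<bullet> ?y) / g" using g0 by (simp add: field_simps power2_eq_square)
    finally have "(?y \<bullet> ?y) / g \<le> x \<bullet> ?y" by simp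
    then have "?y \<bullet> ?y \<le> g * (x \<bullet> ?y)" using g0 by (simp add: field_simps)
    then show ?thesis using AA by simp
  qed
  show "g * (x \<bullet> (A *v x)) \<le> g^2 * (x \<bullet> x)"
    using mult_left_mono[OF iv[of x], of g] g0 by (simp add: power2_eq_square algebra_simps)
qed

definition Tq :: "real \<Rightarrow> real" where "Tq u = (max 0 u)^2"

lemma Tq_pos_eq: "0 < u \<Longrightarrow> Tq u = u^2" by (simp add: Tq_def)
lemma Tq_neg_eq: "u \<le> 0 \<Longrightarrow> Tq u = 0" by (simp add: Tq_def)

lemma DERIV_Tq: "(Tq has_real_derivative 2 * max 0 u) (at u)"
proof -
  consider "u > 0" | "u < 0" | "u = 0" by linarith
  then show ?thesis
  proof cases
    case 1
    have d: "((\<lambda>u. u^2) has_real_derivative 2 * u) (at u)"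
      using DERIV_pow[of 2 u] by simp
    show ?thesis
    proof (rule has_field_derivative_transform_within_open[where S="{0<..}" and f="\<lambda>u. u^2"])
      show "((\<lambda>u. u^2) has_real_derivative 2 * max 0 u) (at u)" using d 1 by simp
      show "x \<in> {0<..} \<Longrightarrow> x^2 = Tq x" for x by (simp add: Tq_pos_eq)
    qed (use 1 in auto)
  next
    case 2
    show ?thesis
    proof (rule has_field_derivative_transform_within_open[where S="{..<0}" and f="\<lambda>u. 0"])
      show "((\<lambda>u. 0) has_real_derivative 2 * max 0 u) (at u)" using 2 by simp
      show "x \<in> {..<0} \<Longrightarrow> 0 = Tq x" for x by (simp add: Tq_neg_eq)
    qed (use 2 in auto)
  next
    case 3
    have bnd: "norm ((Tq y - Tq 0) / (y - 0)) \<le> norm y" for y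
    proof -
      consider "0 < y" | "y \<le> 0" by linarith
      then show ?thesis
      proof cases
        case 1 then show ?thesis by (simp add: Tq_pos_eq Tq_neg_eq power2_eq_square)
      next
        case 2 then show ?thesis by (simp add: Tq_neg_eq)
      qed
    qed
    have "((\<lambda>y. (Tq y - Tq 0) / (y - 0)) \<longlongrightarrow> 0) (at 0)"
    proof (rule Lim_null_comparison)
      show "\<forall>\<^sub>F y in at 0. norm ((Tq y - Tq 0) / (y - 0)) \<le> norm y"
        using bnd by (intro always_eventually) blast
      show "((\<lambda>y. norm y) \<longlongrightarrow> 0) (at (0::real))"
        using tendsto_norm_zero[OF tendsto_ident_at[of "0::real" UNIV]] by simp
    qed
    then show ?thesis using 3 by (simp add: has_field_derivative_iff)
  qed
qed

lemma Tq_nonneg: "0 \<le> Tq u" by (simp add: Tq_def)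
lemma Tq_pos: "0 < Tq u \<longleftrightarrow> 0 < u" by (auto simp: Tq_def max_def)
lemma continuous_on_Tq[continuous_intros]: "continuous_on S f \<Longrightarrow> continuous_on S (\<lambda>x. Tq (f x))"
  unfolding Tq_def by (intro continuous_intros)

definition pb :: "real^'d \<Rightarrow> real^'d \<Rightarrow> 'd \<Rightarrow> real^'d \<Rightarrow> real" where
  "pb a b i x = (x$i - a$i) * (b$i - x$i)"

definition bQ :: "real^'d \<Rightarrow> real^'d \<Rightarrow> real^'d \<Rightarrow> real" where
  "bQ a b x = (\<Prod>i\<in>UNIV. Tq (pb a b i x))"

definition bG :: "real^'d \<Rightarrow> real^'d \<Rightarrow> real^'d \<Rightarrow> real^'d" where
  "bG a b x = (\<Sum>i\<in>UNIV. ((\<Prod>j\<in>UNIV - {i}. Tq (pb a b j x)) *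
       (2 * max 0 (pb a b i x) * (a$i + b$i - 2 * x$i))) *\<^sub>R axis i 1)"

lemma continuous_on_pb[continuous_intros]: "continuous_on S (pb a b i)"
  unfolding pb_def by (intro continuous_intros)

lemma bQ_deriv: "GDERIV (bQ a b) x :> bG a b x"
proof -
  have pbd: "(pb a b i has_derivative (\<lambda>h. h$i * (a$i + b$i - 2 * x$i))) (at x)" for i
  proof -
    have d1: "((\<lambda>y. y$i) has_derivative (\<lambda>h. h$i)) (at x)"
      by (rule bounded_linear_imp_has_derivative[OF bounded_linear_vec_nth])
    have "((\<lambda>y. (y$i - a$i) * (b$i - y$i)) has_derivative
        (\<lambda>h. (x$i - a$i) * (0 - h$i) + (h$i - 0) * (b$i - x$i))) (at x)"
      by (rule has_derivative_mult[OF has_derivative_diff[OF d1 has_derivative_const]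
            has_derivative_diff[OF has_derivative_const d1]])
    then show ?thesis unfolding pb_def
      by (rule has_derivative_eq_rhs) (simp add: fun_eq_iff algebra_simps)
  qed
  have qd: "((\<lambda>x. Tq (pb a b i x)) has_derivative
       (\<lambda>h. h$i * (a$i + b$i - 2 * x$i) * (2 * max 0 (pb a b i x)))) (at x)" for i
  proof -
    have "((\<lambda>x. Tq (pb a b i x)) has_derivative (\<lambda>h. (2 * max 0 (pb a b i x)) * (h$i * (a$i + b$i - 2 * x$i)))) (at x)"
      using has_derivative_compose[OF pbd[of i] DERIV_Tq[of "pb a b i x", unfolded has_field_derivative_def]]
      by (simp add: o_def)
    then show ?thesis by (simp add: ac_simps)
  qed
  have "(bQ a b has_derivative (\<lambda>y. \<Sum>i\<in>UNIV. y$i * (a$i + b$i - 2 * x$i) * (2 * max 0 (pb a b i x))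
           * (\<Prod>j\<in>UNIV - {i}. Tq (pb a b j x)))) (at x)"
    unfolding bQ_def by (rule has_derivative_prod) (rule qd)
  moreover have "(\<lambda>y. \<Sum>i\<in>UNIV. y$i * (a$i + b$i - 2 * x$i) * (2 * max 0 (pb a b i x))
           * (\<Prod>j\<in>UNIV - {i}. Tq (pb a b j x))) = (\<lambda>h. h \<bullet> bG a b x)"
    by (rule ext) (simp add: bG_def inner_sum_right inner_axis ac_simps)
  ultimately show ?thesis unfolding gderiv_def by simp
qed

lemma bQ_nonneg: "0 \<le> bQ a b x"
  unfolding bQ_def by (intro prod_nonneg) (simp add: Tq_nonneg)

lemma bQ_pos_iff:
  assumes "\<forall>i. a$i < b$i"
  shows "0 < bQ a b x \<longleftrightarrow> x \<in> box a b"
proof -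
  have "0 < bQ a b x \<longleftrightarrow> (\<forall>i. 0 < Tq (pb a b i x))"
  proof
    assume "\<forall>i. 0 < Tq (pb a b i x)" then show "0 < bQ a b x" unfolding bQ_def by (intro prod_pos) auto
  next
    assume *: "0 < bQ a b x"
    show "\<forall>i. 0 < Tq (pb a b i x)"
    proof
      fix i
      have "bQ a b x \<noteq> 0" using * by simp
      then have "Tq (pb a b i x) \<noteq> 0" unfolding bQ_def by auto
      then show "0 < Tq (pb a b i x)" using Tq_nonneg[of "pb a b i x"] by linarith
    qed
  qed
  also have "\<dots> \<longleftrightarrow> (\<forall>i. 0 < pb a b i x)" by (simp add: Tq_pos)
  also have "\<dots> \<longleftrightarrow> x \<in> box a b"
  proof -
    have "0 < pb a b i x \<longleftrightarrow> a$i < x$i \<and> x$i < b$i" for i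
    proof
      assume h: "0 < pb a b i x"
      show "a$i < x$i \<and> x$i < b$i"
      proof (rule ccontr)
        assume "\<not> (a$i < x$i \<and> x$i < b$i)"
        then consider "x$i \<le> a$i" | "b$i \<le> x$i" by linarith
        then have "pb a b i x \<le> 0"
        proof cases
          case 1 then show ?thesis using assms[rule_format, of i] unfolding pb_def
            by (intro mult_nonpos_nonneg) auto
        next
          case 2 then show ?thesis using assms[rule_format, of i] unfolding pb_def
            by (intro mult_nonneg_nonpos) auto
        qed
        with h show False by simp
      qed
    next
      assume "a$i < x$i \<and> x$i < b$i"
      then show "0 < pb a b i x" unfolding pb_def by (intro mult_pos_pos) auto
    qed
    then show ?thesis by (simp add: mem_box_cart)
  qed
  finally show ?thesis .
qed

definition phik :: "real^'d \<Rightarrow> real^'d \<Rightarrow> nat \<Rightarrow> real^'d \<Rightarrow> real" where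
  "phik a b k x = real k * bQ a b x / (1 + real k * bQ a b x)"

definition gphik :: "real^'d \<Rightarrow> real^'d \<Rightarrow> nat \<Rightarrow> real^'d \<Rightarrow> real^'d" where
  "gphik a b k x = (real k / (1 + real k * bQ a b x)^2) *\<^sub>R bG a b x"

lemma continuous_on_bQ[continuous_intros]: "continuous_on S (bQ a b)"
  unfolding bQ_def by (intro continuous_intros)

lemma continuous_on_bG: "continuous_on S (bG a b)"
  unfolding bG_def by (intro continuous_intros)

lemma den_pos: "0 < 1 + real k * bQ a b x"
  using bQ_nonneg[of a b x] by (smt (verit) of_nat_0_le_iff mult_nonneg_nonneg)

lemma phik_deriv: "GDERIV (phik a b k) x :> gphik a b k x"
proof -
  have "DERIV (\<lambda>s. real k * s / (1 + real k * s)) (bQ a b x) :> real k / (1 + real k * bQ a b x)^2"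
    using den_pos[of k a b x]
    by (auto intro!: derivative_eq_intros simp: field_simps power2_eq_square)
  from GDERIV_DERIV_compose[OF bQ_deriv this] show ?thesis
    unfolding phik_def gphik_def by simp
qed

lemma continuous_on_phik: "continuous_on S (phik a b k)"
  unfolding phik_def
  by (intro continuous_intros) (metis den_pos less_irrefl)

lemma continuous_on_gphik: "continuous_on S (gphik a b k)"
  unfolding gphik_def
  by (intro continuous_intros continuous_on_bG) (metis den_pos less_irrefl zero_less_power)

lemma phik_support:
  assumes "\<forall>i. a$i < b$i"
  shows "{x. phik a b k x \<noteq> 0} \<subseteq> box a b"
proof
  fix x assume "x \<in> {x. phik a b k x \<noteq> 0}"
  then have "bQ a b x \<noteq> 0" by (auto simp: phik_def)
  then have "0 < bQ a b x" using bQ_nonneg[of a b x] by linarith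
  then show "x \<in> box a b" using bQ_pos_iff[OF assms] by simp
qed

lemma testfn_phik:
  assumes "\<forall>i. a$i < b$i" and "cbox a b \<subseteq> D"
  shows "testfn D (phik a b k) (gphik a b k)"
proof -
  have "{x. phik a b k x \<noteq> 0} \<subseteq> cbox a b"
    using phik_support[OF assms(1), of k] box_subset_cbox[of a b] by blast
  then have cl: "closure {x. phik a b k x \<noteq> 0} \<subseteq> cbox a b"
    by (rule closure_minimal) (rule closed_cbox)
  have "bounded {x. phik a b k x \<noteq> 0}"
    using phik_support[OF assms(1)] bounded_box bounded_subset by blast
  then have cp: "compact (closure {x. phik a b k x \<noteq> 0})" by (simp add: compact_closure)
  show ?thesis unfolding testfn_def
  proof (intro conjI allI)
    show "GDERIV (phik a b k) x :> gphik a b k x" for x by (rule phik_deriv)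
    show "continuous_on UNIV (gphik a b k)" by (rule continuous_on_gphik)
    show "compact (closure {x. phik a b k x \<noteq> 0})" by (rule cp)
    show "closure {x. phik a b k x \<noteq> 0} \<subseteq> D" using cl assms(2) by (rule order_trans)
  qed
qed

lemma phik_bound: "\<bar>phik a b k x\<bar> \<le> 1"
proof -
  have n: "0 \<le> real k * bQ a b x" using bQ_nonneg[of a b x] by simp
  have d: "0 < 1 + real k * bQ a b x" by (rule den_pos)
  have "real k * bQ a b x / (1 + real k * bQ a b x) \<le> 1" using d by (simp add: divide_le_eq)
  moreover have "0 \<le> real k * bQ a b x / (1 + real k * bQ a b x)" using n d by simp
  ultimately show ?thesis unfolding phik_def by (metis abs_of_nonneg)
qed

lemma phik_lim:
  assumes "\<forall>i. a$i < b$i"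
  shows "(\<lambda>k. phik a b k x) \<longlonglongrightarrow> indicator (box a b) x"
proof (cases "x \<in> box a b")
  case True
  then have q: "0 < bQ a b x" using bQ_pos_iff[OF assms] by simp
  have eq: "phik a b k x = 1 - 1 / (1 + real k * bQ a b x)" for k
    using den_pos[of k a b x] by (simp add: phik_def field_simps)
  have "(\<lambda>k. 1 / (1 + real k * bQ a b x)) \<longlonglongrightarrow> 0"
  proof (rule tendsto_divide_0[OF tendsto_const])
    have "LIM k sequentially. real k * bQ a b x :> at_top"
      by (rule filterlim_at_top_mult_tendsto_pos[OF tendsto_const q filterlim_real_sequentially])
    then have "LIM k sequentially. 1 + real k * bQ a b x :> at_top"
      by (rule filterlim_tendsto_add_at_top[OF tendsto_const])
    then show "filterlim (\<lambda>k. 1 + real k * bQ a b x) at_infinity sequentially"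
      by (rule filterlim_at_top_imp_at_infinity)
  qed
  then have "(\<lambda>k. 1 - 1 / (1 + real k * bQ a b x)) \<longlonglongrightarrow> 1 - 0"
    by (intro tendsto_intros)
  then show ?thesis using True by (simp add: eq)
next
  case False
  then have "\<not> 0 < bQ a b x" using bQ_pos_iff[OF assms] by simp
  then have "bQ a b x = 0" using bQ_nonneg[of a b x] by linarith
  then show ?thesis using False by (simp add: phik_def)
qed

lemma box_zero:
  fixes h :: "real^'d \<Rightarrow> real"
  assumes hm: "h \<in> borel_measurable lborel" and hi: "set_integrable lborel D h"
    and Dm: "D \<in> sets lborel" and sub: "cbox a b \<subseteq> D"
    and H: "\<And>k. (\<forall>i. a$i < b$i) \<Longrightarrow> (LINT x:D|lborel. h x * phik a b k x) = 0"
  shows "(LINT x:box a b|lborel. h x) = 0"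
proof (cases "box a b = {}")
  case True then show ?thesis by (simp add: set_lebesgue_integral_def)
next
  case False
  then have ab: "\<forall>i. a$i < b$i" by (simp add: interval_ne_empty_cart)
  have boxm: "box a b \<in> sets lborel" by simp
  have bD: "box a b \<subseteq> D" using sub box_subset_cbox by blast
  let ?s = "\<lambda>k x. indicator D x *\<^sub>R (h x * phik a b k x)"
  let ?f = "\<lambda>x. indicator (box a b) x *\<^sub>R h x"
  let ?w = "\<lambda>x. indicator D x *\<^sub>R \<bar>h x\<bar>"
  have phim: "phik a b k \<in> borel_measurable lborel" for k
    using borel_measurable_continuous_onI[OF continuous_on_phik[of UNIV a b k]] by simp
  have lim: "(\<lambda>k. integral\<^sup>L lborel (?s k)) \<longlonglongrightarrow> integral\<^sup>L lborel ?f"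
  proof (rule integral_dominated_convergence)
    show "?f \<in> borel_measurable lborel" using hm boxm by simp
    show "?s k \<in> borel_measurable lborel" for k using hm Dm phim[of k] by simp
    show "integrable lborel ?w" using set_integrable_abs[OF hi] unfolding set_integrable_def .
    show "AE x in lborel. (\<lambda>k. ?s k x) \<longlonglongrightarrow> ?f x"
    proof (rule AE_I2)
      fix x
      have e: "indicator D x * (h x * indicator (box a b) x) = indicator (box a b) x * (h x::real)"
        using bD by (cases "x \<in> box a b") (auto simp: indicator_def)
      have "(\<lambda>k. indicator D x * (h x * phik a b k x)) \<longlonglongrightarrow> indicator D x * (h x * indicator (box a b) x)"
        by (intro tendsto_intros phik_lim[OF ab])
      then show "(\<lambda>k. ?s k x) \<longlonglongrightarrow> ?f x" by (simp add: e)
    qed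
    show "AE x in lborel. norm (?s k x) \<le> ?w x" for k
    proof (rule AE_I2)
      fix x
      have "\<bar>h x * phik a b k x\<bar> \<le> \<bar>h x\<bar>"
        using phik_bound[of a b k x] by (simp add: abs_mult mult_left_le)
      then show "norm (?s k x) \<le> ?w x" by (auto simp: indicator_def)
    qed
  qed
  have z: "integral\<^sup>L lborel (?s k) = 0" for k using H[OF ab, of k] by (simp add: set_lebesgue_integral_def)
  have "(\<lambda>k. integral\<^sup>L lborel (?s k)) \<longlonglongrightarrow> 0" unfolding z by (rule tendsto_const)
  with lim have "integral\<^sup>L lborel ?f = 0" by (rule LIMSEQ_unique)
  then show ?thesis by (simp add: set_lebesgue_integral_def)
qed

lemma open_box_cover:
  fixes U :: "'a::euclidean_space set"
  assumes "open U"
  obtains F where "countable F" "F \<subseteq> {box a b | a b. cbox a b \<subseteq> U}" "\<Union>F = U"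
proof -
  define R where "R = {a::'a. \<forall>i\<in>Basis. a \<bullet> i \<in> \<rat>}"
  have subR: "R \<subseteq> (\<lambda>f. \<Sum>i\<in>Basis. f i *\<^sub>R i) ` (Basis \<rightarrow>\<^sub>E \<rat>)"
  proof
    fix a assume "a \<in> R"
    then have "restrict (\<lambda>i. a \<bullet> i) Basis \<in> Basis \<rightarrow>\<^sub>E \<rat>" by (auto simp: R_def)
    moreover have "a = (\<Sum>i\<in>Basis. restrict (\<lambda>i. a \<bullet> i) Basis i *\<^sub>R i)"
      by (simp add: euclidean_representation)
    ultimately show "a \<in> (\<lambda>f. \<Sum>i\<in>Basis. f i *\<^sub>R i) ` (Basis \<rightarrow>\<^sub>E \<rat>)" by blast
  qed
  have cP: "countable (Basis \<rightarrow>\<^sub>E (\<rat>::real set))"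
    by (intro countable_PiE) (auto simp: countable_rat)
  have cR: "countable R" by (rule countable_subset[OF subR countable_image[OF cP]])
  define F where "F = {box a b | a b. a \<in> R \<and> b \<in> R \<and> cbox a b \<subseteq> U}"
  have subF: "F \<subseteq> (\<lambda>(a,b). box a b) ` (R \<times> R)" by (auto simp: F_def)
  have cRR: "countable (R \<times> R)" using cR by (intro countable_SIGMA) auto
  have "countable F" by (rule countable_subset[OF subF countable_image[OF cRR]])
  moreover have "F \<subseteq> {box a b | a b. cbox a b \<subseteq> U}" by (auto simp: F_def)
  moreover have "\<Union>F = U"
  proof
    show "\<Union>F \<subseteq> U"
    proof
      fix x assume "x \<in> \<Union>F"
      then obtain a b where "x \<in> box a b" "cbox a b \<subseteq> U" by (auto simp: F_def)
      then show "x \<in> U" using box_subset_cbox[of a b] by blast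
    qed
    show "U \<subseteq> \<Union>F"
    proof
      fix x assume "x \<in> U"
      then obtain e where e: "e > 0" "ball x e \<subseteq> U" using assms openE by blast
      obtain a b where ab: "\<forall>i\<in>Basis. a \<bullet> i \<in> \<rat> \<and> b \<bullet> i \<in> \<rat>" "x \<in> box a b" "box a b \<subseteq> ball x (e/2)"
        using rational_boxes[of "e/2" x] e by auto
      have ne: "box a b \<noteq> {}" using ab(2) by blast
      have "cbox a b = closure (box a b)" using closure_box[OF ne] by simp
      also have "\<dots> \<subseteq> closure (ball x (e/2))" using ab(3) by (rule closure_mono)
      also have "\<dots> = cball x (e/2)" using e by simp
      also have "\<dots> \<subseteq> ball x e" using e by (auto simp: subset_eq)
      finally have "cbox a b \<subseteq> U" using e(2) by (rule order_trans)
      then have "box a b \<in> F" using ab(1) by (auto simp: F_def R_def)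
      then show "x \<in> \<Union>F" using ab(2) by blast
    qed
  qed
  ultimately show ?thesis by (rule that)
qed

lemma restrict_sets_boxes:
  fixes D :: "'a::euclidean_space set"
  assumes D: "open D"
  shows "((\<inter>) D) ` sets borel = sigma_sets D {box a b | a b. cbox a b \<subseteq> D}"
    (is "_ = sigma_sets D ?E")
proof
  have sa: "sigma_algebra D (sets (restrict_space borel D))"
    using sets.sigma_algebra_axioms[of "restrict_space borel D"] by (simp add: space_restrict_space)
  have "?E \<subseteq> sets (restrict_space borel D)"
  proof
    fix X assume "X \<in> ?E"
    then obtain a b where X: "X = box a b" "cbox a b \<subseteq> D" by blast
    then have "X = D \<inter> box a b" using box_subset_cbox by blast
    then show "X \<in> sets (restrict_space borel D)" by (simp add: sets_restrict_space)
  qed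
  then have "sigma_sets D ?E \<subseteq> sets (restrict_space borel D)"
    by (rule sigma_algebra.sigma_sets_subset[OF sa])
  then show "sigma_sets D ?E \<subseteq> (\<inter>) D ` sets borel" by (simp add: sets_restrict_space)
next
  have "A \<in> sigma_sets UNIV {S. open S} \<Longrightarrow> D \<inter> A \<in> sigma_sets D ?E" for A
  proof (induction rule: sigma_sets.induct)
    case (Basic S)
    then have "open (D \<inter> S)" using D by auto
    then obtain F where F: "countable F" "F \<subseteq> {box a b | a b. cbox a b \<subseteq> D \<inter> S}" "\<Union>F = D \<inter> S"
      by (rule open_box_cover)
    have "\<Union>F \<in> sigma_sets D ?E"
    proof (rule sigma_sets_UNION[OF F(1)])
      fix X assume "X \<in> F"
      then have "X \<in> ?E" using F(2) by blast
      then show "X \<in> sigma_sets D ?E" by (rule sigma_sets.Basic)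
    qed
    then show ?case using F(3) by simp
  next
    case Empty then show ?case by (simp add: sigma_sets.Empty)
  next
    case (Compl a)
    have "D \<inter> (UNIV - a) = D - (D \<inter> a)" by blast
    then show ?case using sigma_sets.Compl[OF Compl.IH] by simp
  next
    case (Union a)
    have "D \<inter> \<Union> (range a) = (\<Union>i. D \<inter> a i)" by blast
    then show ?case using sigma_sets.Union[of "\<lambda>i. D \<inter> a i", OF Union.IH] by simp
  qed
  then show "(\<inter>) D ` sets borel \<subseteq> sigma_sets D ?E" by (auto simp: sets_borel)
qed

lemma box_dense_zero:
  fixes h :: "real^'d \<Rightarrow> real"
  assumes hm: "h \<in> borel_measurable lborel" and hi: "set_integrable lborel D h" and D: "open D"
    and Z: "\<And>a b. cbox a b \<subseteq> D \<Longrightarrow> (LINT x:box a b|lborel. h x) = 0"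
  shows "AE x in lborel. x \<in> D \<longrightarrow> h x = 0"
proof (cases "D = {}")
  case True then show ?thesis by simp
next
  case False
  define f1 where "f1 x = ennreal (max 0 (h x)) * indicator D x" for x
  define f2 where "f2 x = ennreal (max 0 (- h x)) * indicator D x" for x
  have Dm: "D \<in> sets lborel" using D by simp
  have f1m: "f1 \<in> borel_measurable lborel" unfolding f1_def using hm Dm by simp
  have f2m: "f2 \<in> borel_measurable lborel" unfolding f2_def using hm Dm by simp
  let ?E = "{box a b | a b. cbox a b \<subseteq> (D::(real^'d) set)}"
  have key: "(\<integral>\<^sup>+x. f1 x * indicator B x \<partial>lborel) = (\<integral>\<^sup>+x. f2 x * indicator B x \<partial>lborel)
      \<and> (\<integral>\<^sup>+x. f1 x * indicator B x \<partial>lborel) \<noteq> \<infinity>" if BE: "B \<in> ?E" for B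
  proof -
    obtain a b where B: "B = box a b" "cbox a b \<subseteq> D" using BE by blast
    let ?p = "\<lambda>x. indicator B x * h x"
    have BD: "B \<subseteq> D" using B box_subset_cbox by blast
    have Bm: "B \<in> sets lborel" using B by simp
    have pint: "integrable lborel ?p" using set_integrable_subset[OF hi Bm BD] by (simp add: set_integrable_def)
    have i1: "integrable lborel (\<lambda>x. max 0 (?p x))" using pint by (intro integrable_max) auto
    have i2: "integrable lborel (\<lambda>x. max 0 (- ?p x))" using pint by (intro integrable_max integrable_minus) auto
    have e1: "f1 x * indicator B x = ennreal (max 0 (?p x))" for x
      using BD by (auto simp: f1_def indicator_def)
    have e2: "f2 x * indicator B x = ennreal (max 0 (- ?p x))" for x
      using BD by (auto simp: f2_def indicator_def)
    have n1: "(\<integral>\<^sup>+x. f1 x * indicator B x \<partial>lborel) = ennreal (\<integral>x. max 0 (?p x) \<partial>lborel)"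
      unfolding e1 by (rule nn_integral_eq_integral[OF i1]) auto
    have n2: "(\<integral>\<^sup>+x. f2 x * indicator B x \<partial>lborel) = ennreal (\<integral>x. max 0 (- ?p x) \<partial>lborel)"
      unfolding e2 by (rule nn_integral_eq_integral[OF i2]) auto
    have "(\<integral>x. max 0 (?p x) \<partial>lborel) - (\<integral>x. max 0 (- ?p x) \<partial>lborel)
        = (\<integral>x. max 0 (?p x) - max 0 (- ?p x) \<partial>lborel)"
      by (rule Bochner_Integration.integral_diff[OF i1 i2, symmetric])
    also have "\<dots> = (\<integral>x. ?p x \<partial>lborel)" by (intro Bochner_Integration.integral_cong) auto
    also have "\<dots> = 0" using Z[OF B(2)] B(1) by (simp add: set_lebesgue_integral_def)
    finally have "(\<integral>x. max 0 (?p x) \<partial>lborel) = (\<integral>x. max 0 (- ?p x) \<partial>lborel)" by simp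
    then show ?thesis using n1 n2 by simp
  qed
  obtain F where F: "countable F" "F \<subseteq> ?E" "\<Union>F = D" using open_box_cover[OF D] by blast
  have "density lborel f1 = density lborel f2"
  proof (rule measure_eqI_restrict_generator[of ?E D _ _ F])
    show "Int_stable ?E"
    proof (rule Int_stableI)
      fix X Y assume "X \<in> ?E" "Y \<in> ?E"
      then obtain a b c d where X: "X = box a b" "cbox a b \<subseteq> D" and Y: "Y = box c d" "cbox c d \<subseteq> D"
        by blast
      define m where "m = (\<chi> i. max (a$i) (c$i))"
      define n where "n = (\<chi> i. min (b$i) (d$i))"
      have "X \<inter> Y = box m n" unfolding X Y m_def n_def by (auto simp: mem_box_cart)
      moreover have "cbox m n \<subseteq> cbox a b" unfolding m_def n_def by (auto simp: mem_box_cart)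
      ultimately show "X \<inter> Y \<in> ?E" using X(2) by blast
    qed
    show "?E \<subseteq> Pow D" using box_subset_cbox by blast
    show "emeasure (density lborel f1) X = emeasure (density lborel f2) X" if "X \<in> ?E" for X
    proof -
      have Xm: "X \<in> sets lborel" using that by auto
      show ?thesis using key[OF that] by (simp add: emeasure_density[OF f1m Xm] emeasure_density[OF f2m Xm])
    qed
    show "sets (density lborel f1) = sets (density lborel f2)" by simp
    show "D \<in> sets (density lborel f1)" using Dm by simp
    show "sets (restrict_space (density lborel f1) D) = sigma_sets D ?E"
      using restrict_sets_boxes[OF D] by (simp add: sets_restrict_space)
    show "sets (restrict_space (density lborel f2) D) = sigma_sets D ?E"
      using restrict_sets_boxes[OF D] by (simp add: sets_restrict_space)
    show "AE x in density lborel f1. x \<in> D"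
      by (subst AE_density[OF f1m]) (auto simp: f1_def indicator_def)
    show "AE x in density lborel f2. x \<in> D"
      by (subst AE_density[OF f2m]) (auto simp: f2_def indicator_def)
    show "countable F" by (rule F(1))
    show "F \<noteq> {}" using F(3) False by auto
    show "F \<subseteq> ?E" by (rule F(2))
    show "\<Union>F = D" by (rule F(3))
    show "emeasure (density lborel f1) X \<noteq> \<infinity>" if "X \<in> F" for X
    proof -
      have XE: "X \<in> ?E" using that F(2) by blast
      then have Xm: "X \<in> sets lborel" by auto
      show ?thesis using key[OF XE] by (auto simp: emeasure_density[OF f1m Xm] emeasure_density[OF f2m Xm])
    qed
  qed
  then have "AE x in lborel. f1 x = f2 x" using sigma_finite_measure.density_unique_iff[OF sigma_finite_lborel f1m f2m] by simp
  then show ?thesis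
  proof (rule AE_mp, intro AE_I2 impI)
    fix x assume eq: "f1 x = f2 x" and xD: "x \<in> D"
    then have e: "ennreal (h x) = ennreal (- h x)" by (simp add: f1_def f2_def)
    show "h x = 0"
    proof (rule ccontr)
      assume "h x \<noteq> 0"
      then consider "h x > 0" | "h x < 0" by linarith
      then show False
      proof cases
        case 1
        then have "ennreal (- h x) = 0" by (simp add: ennreal_eq_0_iff)
        with e have "ennreal (h x) = 0" by simp
        with 1 show False by simp
      next
        case 2
        then have "ennreal (h x) = 0" by (simp add: ennreal_eq_0_iff)
        with e have "ennreal (- h x) = 0" by simp
        with 2 show False by simp
      qed
    qed
  qed
qed

lemma set_integrable_bounded_mult:
  fixes u :: "'a \<Rightarrow> real"
  assumes "set_integrable M A u" "A \<in> sets M" "phi \<in> borel_measurable M" "\<And>x. \<bar>phi x\<bar> \<le> 1"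
  shows "set_integrable M A (\<lambda>x. u x * phi x)"
  unfolding set_integrable_def
proof (rule Bochner_Integration.integrable_bound)
  show "integrable M (\<lambda>x. indicator A x *\<^sub>R u x)" using assms(1) by (simp add: set_integrable_def)
  have "(\<lambda>x. indicator A x *\<^sub>R u x) \<in> borel_measurable M"
    using assms(1) unfolding set_integrable_def by (rule borel_measurable_integrable)
  then have "(\<lambda>x. (indicator A x *\<^sub>R u x) * phi x) \<in> borel_measurable M"
    using assms(3) by (rule borel_measurable_times)
  then show "(\<lambda>x. indicator A x *\<^sub>R (u x * phi x)) \<in> borel_measurable M"
    by (simp add: mult.assoc)
  show "AE x in M. norm (indicator A x *\<^sub>R (u x * phi x)) \<le> norm (indicator A x *\<^sub>R u x)"
  proof (rule AE_I2)
    fix x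
    have "\<bar>u x * phi x\<bar> \<le> \<bar>u x\<bar>" using assms(4)[of x] by (simp add: abs_mult mult_left_le)
    then show "norm (indicator A x *\<^sub>R (u x * phi x)) \<le> norm (indicator A x *\<^sub>R u x)"
      by (auto simp: indicator_def)
  qed
qed

lemma L2_comp_integrable:
  fixes g :: "real^'d \<Rightarrow> real^'d"
  assumes gm: "g \<in> borel_measurable lborel" and gi: "set_integrable lborel D (\<lambda>x. (norm (g x))^2)"
    and bD: "bounded D" and Dm: "D \<in> sets lborel"
  shows "set_integrable lborel D (\<lambda>x. g x $ i)"
  unfolding set_integrable_def
proof (rule Bochner_Integration.integrable_bound)
  have i1: "integrable lborel (indicator D :: _ \<Rightarrow> real)"
    using Dm emeasure_bounded_finite[OF bD] by simp
  have i2: "integrable lborel (\<lambda>x. indicator D x *\<^sub>R (norm (g x))^2)" using gi by (simp add: set_integrable_def)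
  show "integrable lborel (\<lambda>x. indicator D x + indicator D x *\<^sub>R (norm (g x))^2)"
    using i1 i2 by (rule Bochner_Integration.integrable_add)
  have "(\<lambda>x. g x $ i) \<in> borel_measurable lborel" using measurable_compose[OF gm borel_measurable_nth] .
  then show "(\<lambda>x. indicator D x *\<^sub>R g x $ i) \<in> borel_measurable lborel" using Dm by simp
  show "AE x in lborel. norm (indicator D x *\<^sub>R g x $ i) \<le> norm (indicator D x + indicator D x *\<^sub>R (norm (g x))^2)"
  proof (rule AE_I2)
    fix x
    have c: "\<bar>g x $ i\<bar> \<le> norm (g x)" by (rule component_le_norm_cart)
    have "norm (g x) \<le> 1 + (norm (g x))^2"
    proof (cases "norm (g x) \<le> 1")
      case True then show ?thesis by (smt (verit) zero_le_power2)
    next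
      case False
      then have "norm (g x) \<le> norm (g x) * norm (g x)" by (simp add: mult_le_cancel_left1)
      then show ?thesis by (simp add: power2_eq_square)
    qed
    with c have "\<bar>g x $ i\<bar> \<le> 1 + (norm (g x))^2" by linarith
    then show "norm (indicator D x *\<^sub>R g x $ i) \<le> norm (indicator D x + indicator D x *\<^sub>R (norm (g x))^2)"
      by (auto simp: indicator_def)
  qed
qed

lemma weak_grad_unique:
  fixes f :: "real^'d \<Rightarrow> real"
  assumes D: "open D" "bounded D" and H: "H1 D f g1" "H1 D f g2"
  shows "AE x in lborel. x \<in> D \<longrightarrow> g1 x = g2 x"
proof -
  have Dm: "D \<in> sets lborel" using D by simp
  have gm1: "g1 \<in> borel_measurable lborel" and gi1: "set_integrable lborel D (\<lambda>x. (norm (g1 x))^2)"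
    and wg1: "weak_grad D f g1" using H(1) by (auto simp: H1_def)
  have gm2: "g2 \<in> borel_measurable lborel" and gi2: "set_integrable lborel D (\<lambda>x. (norm (g2 x))^2)"
    and wg2: "weak_grad D f g2" using H(2) by (auto simp: H1_def)
  have comp: "AE x in lborel. x \<in> D \<longrightarrow> g1 x $ i = g2 x $ i" for i
  proof -
    let ?h = "\<lambda>x. g1 x $ i - g2 x $ i"
    have i1: "set_integrable lborel D (\<lambda>x. g1 x $ i)" by (rule L2_comp_integrable[OF gm1 gi1 D(2) Dm])
    have i2: "set_integrable lborel D (\<lambda>x. g2 x $ i)" by (rule L2_comp_integrable[OF gm2 gi2 D(2) Dm])
    have hi: "set_integrable lborel D ?h" by (rule set_integral_diff(1)[OF i1 i2])
    have m1: "(\<lambda>x. g1 x $ i) \<in> borel_measurable lborel" using measurable_compose[OF gm1 borel_measurable_nth] .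
    have m2: "(\<lambda>x. g2 x $ i) \<in> borel_measurable lborel" using measurable_compose[OF gm2 borel_measurable_nth] .
    have hm: "?h \<in> borel_measurable lborel" using m1 m2 by simp
    have "AE x in lborel. x \<in> D \<longrightarrow> ?h x = 0"
    proof (rule box_dense_zero[OF hm hi D(1)])
      fix a b assume sub: "cbox a b \<subseteq> D"
      show "(LINT x:box a b|lborel. ?h x) = 0"
      proof (rule box_zero[OF hm hi Dm sub])
        fix k assume ab: "\<forall>i. a$i < b$i"
        have tf: "testfn D (phik a b k) (gphik a b k)" by (rule testfn_phik[OF ab sub])
        have w1: "(LINT x:D|lborel. f x * (gphik a b k x $ i)) = - (LINT x:D|lborel. g1 x $ i * phik a b k x)"
          using wg1 tf unfolding weak_grad_def by blast
        have w2: "(LINT x:D|lborel. f x * (gphik a b k x $ i)) = - (LINT x:D|lborel. g2 x $ i * phik a b k x)"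
          using wg2 tf unfolding weak_grad_def by blast
        have pm: "phik a b k \<in> borel_measurable lborel"
          using borel_measurable_continuous_onI[OF continuous_on_phik[of UNIV a b k]] by simp
        have j1: "set_integrable lborel D (\<lambda>x. g1 x $ i * phik a b k x)"
          by (rule set_integrable_bounded_mult[OF i1 Dm pm phik_bound])
        have j2: "set_integrable lborel D (\<lambda>x. g2 x $ i * phik a b k x)"
          by (rule set_integrable_bounded_mult[OF i2 Dm pm phik_bound])
        have "(LINT x:D|lborel. ?h x * phik a b k x)
            = (LINT x:D|lborel. g1 x $ i * phik a b k x - g2 x $ i * phik a b k x)"
          by (simp add: left_diff_distrib)
        also have "\<dots> = (LINT x:D|lborel. g1 x $ i * phik a b k x) - (LINT x:D|lborel. g2 x $ i * phik a b k x)"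
          by (rule set_integral_diff(2)[OF j1 j2])
        also have "\<dots> = 0" using w1 w2 by simp
        finally show "(LINT x:D|lborel. ?h x * phik a b k x) = 0" .
      qed
    qed
    then show ?thesis by (rule AE_mp) (auto intro!: AE_I2)
  qed
  then have "\<forall>i. AE x in lborel. x \<in> D \<longrightarrow> g1 x $ i = g2 x $ i" by blast
  then have "AE x in lborel. \<forall>i. x \<in> D \<longrightarrow> g1 x $ i = g2 x $ i" by (rule AE_all_countable[THEN iffD2])
  then show ?thesis by (rule AE_mp) (auto intro!: AE_I2 simp: vec_eq_iff)
qed

lemma continuous_on_mmult[continuous_intros]:
  fixes f g :: "'a::topological_space \<Rightarrow> real^'n^'n"
  assumes "continuous_on S f" "continuous_on S g"
  shows "continuous_on S (\<lambda>z. f z ** g z)"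
  unfolding matrix_matrix_mult_def
  by (intro continuous_intros assms)

lemma continuous_on_mvmult[continuous_intros]:
  fixes f :: "'a::topological_space \<Rightarrow> real^'n^'n" and g :: "'a \<Rightarrow> real^'n"
  assumes "continuous_on S f" "continuous_on S g"
  shows "continuous_on S (\<lambda>z. f z *v g z)"
  unfolding matrix_vector_mult_def
  by (intro continuous_intros assms)

lemma continuous_on_mpow[continuous_intros]:
  fixes f :: "'a::topological_space \<Rightarrow> real^'n^'n"
  assumes "continuous_on S f"
  shows "continuous_on S (\<lambda>z. mpow (f z) r)"
proof (induction r)
  case 0 then show ?case by simp
next
  case (Suc r) then show ?case using assms by (simp add: continuous_on_mmult)
qed

lemma mpow_1[simp]: "mpow A (Suc 0) = A" by simp
lemma mpow_2: "mpow A 2 = A ** A" by (simp add: numeral_2_eq_2)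

definition QG :: "(real^'d) set \<Rightarrow> (real^'d \<Rightarrow> 'w \<Rightarrow> real^'d^'d) \<Rightarrow> (real^'d \<Rightarrow> 'w \<Rightarrow> real^'d) \<Rightarrow> nat \<Rightarrow> 'w \<Rightarrow> ennreal" where
  "QG D C G r w = (\<integral>\<^sup>+x\<in>D. ennreal (G x w \<bullet> (mpow (C x w) r *v G x w)) \<partial>lborel)"

lemma quad_meas:
  fixes C :: "'a \<Rightarrow> real^'d^'d" and G :: "'a \<Rightarrow> real^'d"
  assumes "C \<in> borel_measurable M" "G \<in> borel_measurable M"
  shows "(\<lambda>z. G z \<bullet> (mpow (C z) r *v G z)) \<in> borel_measurable M"
proof -
  have c: "continuous_on UNIV (\<lambda>p::((real^'d^'d) \<times> (real^'d)). snd p \<bullet> (mpow (fst p) r *v snd p))"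
    by (intro continuous_intros)
  show ?thesis using borel_measurable_continuous_Pair[OF assms c] by simp
qed

locale setting =
  fixes D :: "(real^'d) set" and Gam :: "'w measure" and C :: "real^'d \<Rightarrow> 'w \<Rightarrow> real^'d^'d"
    and gam :: "'w \<Rightarrow> real" and alpha :: real
  assumes D: "open D" "bounded D"
    and Cm: "(\<lambda>(x, w). C x w) \<in> borel_measurable (lborel \<Otimes>\<^sub>M Gam)"
    and gm: "gam \<in> borel_measurable Gam" and gpos: "\<forall>w. gam w > 0"
    and a: "alpha > 0" "alpha \<le> 1"
    and ev: "AE w in Gam. AE x in lborel. x \<in> D \<longrightarrow>
           sym_posdef (C x w) \<and> (\<forall>l. is_eigenvalue (C x w) l \<longrightarrow> alpha \<le> l \<and> l \<le> gam w)"
begin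

lemma Dm: "D \<in> sets lborel" using D by simp

lemma integrand_meas:
  assumes Gm: "(\<lambda>(x, w). G x w) \<in> borel_measurable (lborel \<Otimes>\<^sub>M Gam)"
  shows "(\<lambda>(x, w). ennreal (G x w \<bullet> (mpow (C x w) r *v G x w)) * indicator D x) \<in> borel_measurable (lborel \<Otimes>\<^sub>M Gam)"
proof -
  have q: "(\<lambda>z. (case z of (x, w) \<Rightarrow> G x w) \<bullet> (mpow (case z of (x, w) \<Rightarrow> C x w) r *v (case z of (x, w) \<Rightarrow> G x w)))
      \<in> borel_measurable (lborel \<Otimes>\<^sub>M Gam)"
    by (rule quad_meas[OF Cm Gm])
  have i: "(\<lambda>z. indicator D (fst z) :: ennreal) \<in> borel_measurable (lborel \<Otimes>\<^sub>M Gam)"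
    using Dm by (intro measurable_compose[OF measurable_fst]) simp
  have "(\<lambda>z. ennreal ((case z of (x, w) \<Rightarrow> G x w) \<bullet> (mpow (case z of (x, w) \<Rightarrow> C x w) r *v (case z of (x, w) \<Rightarrow> G x w)))
      * indicator D (fst z)) \<in> borel_measurable (lborel \<Otimes>\<^sub>M Gam)"
    by (rule borel_measurable_times_ennreal[OF measurable_compose[OF q measurable_ennreal] i])
  then show ?thesis by (simp add: case_prod_beta)
qed

lemma QG_meas:
  assumes Gm: "(\<lambda>(x, w). G x w) \<in> borel_measurable (lborel \<Otimes>\<^sub>M Gam)"
  shows "(\<lambda>w. QG D C G r w) \<in> borel_measurable Gam"
proof -
  have "(\<lambda>(w, x). ennreal (G x w \<bullet> (mpow (C x w) r *v G x w)) * indicator D x) \<in> borel_measurable (Gam \<Otimes>\<^sub>M lborel)"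
    using integrand_meas[OF Gm] by (subst measurable_pair_swap_iff) simp
  from lborel.borel_measurable_nn_integral[OF this] show ?thesis unfolding QG_def .
qed

lemma inner_meas:
  assumes Gm: "(\<lambda>(x, w). G x w) \<in> borel_measurable (lborel \<Otimes>\<^sub>M Gam)" and w: "w \<in> space Gam"
  shows "(\<lambda>x. ennreal (G x w \<bullet> (mpow (C x w) r *v G x w)) * indicator D x) \<in> borel_measurable lborel"
  using measurable_compose[OF measurable_Pair2'[OF w] integrand_meas[OF Gm]] by simp

lemma grad_ae:
  assumes "H1 D f g"
  shows "AE x in lborel. x \<in> D \<longrightarrow> grad D f x = g x"
proof -
  have "H1 D f (grad D f)" unfolding grad_def by (rule someI[of "H1 D f" g, OF assms])
  from weak_grad_unique[OF D this assms] show ?thesis .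
qed

lemma Xsq_G:
  assumes H: "AE w in Gam. H1 D (\<lambda>x. v x w) (\<lambda>x. G x w)"
  shows "Xsq D Gam C gam s r v = (\<integral>\<^sup>+w. ennreal (gam w ^ s) * QG D C G r w \<partial>Gam)"
  unfolding Xsq_def QG_def
proof (rule nn_integral_cong_AE)
  show "AE w in Gam. ennreal (gam w ^ s) *
        (\<integral>\<^sup>+x\<in>D. ennreal (grad D (\<lambda>x. v x w) x \<bullet> (mpow (C x w) r *v grad D (\<lambda>x. v x w) x)) \<partial>lborel)
      = ennreal (gam w ^ s) * (\<integral>\<^sup>+x\<in>D. ennreal (G x w \<bullet> (mpow (C x w) r *v G x w)) \<partial>lborel)"
    using H
  proof (rule AE_mp, intro AE_I2 impI)
    fix w assume "H1 D (\<lambda>x. v x w) (\<lambda>x. G x w)"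
    from grad_ae[OF this]
    have "AE x in lborel. ennreal (grad D (\<lambda>x. v x w) x \<bullet> (mpow (C x w) r *v grad D (\<lambda>x. v x w) x)) * indicator D x
       = ennreal (G x w \<bullet> (mpow (C x w) r *v G x w)) * indicator D x"
      by (rule AE_mp) (auto intro!: AE_I2 simp: indicator_def)
    then show "ennreal (gam w ^ s) *
        (\<integral>\<^sup>+x\<in>D. ennreal (grad D (\<lambda>x. v x w) x \<bullet> (mpow (C x w) r *v grad D (\<lambda>x. v x w) x)) \<partial>lborel)
      = ennreal (gam w ^ s) * (\<integral>\<^sup>+x\<in>D. ennreal (G x w \<bullet> (mpow (C x w) r *v G x w)) \<partial>lborel)"
      by (simp cong: nn_integral_cong_AE)
  qed
qed

end

lemma ennreal_scale_le:
  fixes a b u v :: real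
  assumes "0 \<le> a" "0 \<le> b" "0 \<le> v" "a * u \<le> b * v"
  shows "ennreal a * ennreal u \<le> ennreal b * ennreal v"
proof (cases "u < 0")
  case True then show ?thesis by (simp add: ennreal_neg)
next
  case False
  then have "ennreal a * ennreal u = ennreal (a * u)" using assms by (simp add: ennreal_mult)
  also have "\<dots> \<le> ennreal (b * v)" using assms by simp
  also have "\<dots> = ennreal b * ennreal v" using assms by (simp add: ennreal_mult)
  finally show ?thesis .
qed

lemma nn_scale_mono:
  fixes c d :: ennreal
  assumes "f \<in> borel_measurable M" "g \<in> borel_measurable M" "AE x in M. c * f x \<le> d * g x"
  shows "c * integral\<^sup>N M f \<le> d * integral\<^sup>N M g"
proof -
  have "c * integral\<^sup>N M f = (\<integral>\<^sup>+x. c * f x \<partial>M)" using assms(1) by (simp add: nn_integral_cmult)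
  also have "\<dots> \<le> (\<integral>\<^sup>+x. d * g x \<partial>M)" using assms(3) by (rule nn_integral_mono_AE)
  also have "\<dots> = d * integral\<^sup>N M g" using assms(2) by (simp add: nn_integral_cmult)
  finally show ?thesis .
qed

lemma sqrt_conv:
  fixes X Y :: ennreal and c d :: real
  assumes le: "ennreal (c^2) * X \<le> ennreal (d^2) * Y" and c: "0 < c" and d: "0 < d"
  shows "ennreal c * (if X = \<infinity> then \<infinity> else ennreal (sqrt (enn2real X)))
       \<le> ennreal d * (if Y = \<infinity> then \<infinity> else ennreal (sqrt (enn2real Y)))"
proof (cases "Y = \<infinity>")
  case True then show ?thesis using d by (simp add: ennreal_mult_top)
next
  case False
  then obtain y where y: "0 \<le> y" "Y = ennreal y" by (cases Y) auto
  have "X \<noteq> \<infinity>"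
  proof
    assume "X = \<infinity>"
    then have "ennreal (c^2) * X = \<infinity>" using c by (simp add: ennreal_mult_top)
    moreover have "ennreal (d^2) * Y < \<infinity>" using y by (simp add: ennreal_mult_less_top)
    ultimately show False using le by simp
  qed
  then obtain x where x: "0 \<le> x" "X = ennreal x" by (cases X) auto
  have "ennreal (c^2 * x) \<le> ennreal (d^2 * y)" using le x y by (simp add: ennreal_mult)
  then have "c^2 * x \<le> d^2 * y" using y by (subst (asm) ennreal_le_iff) auto
  then have "sqrt (c^2 * x) \<le> sqrt (d^2 * y)" by (rule real_sqrt_le_mono)
  then have "c * sqrt x \<le> d * sqrt y" using c d by (simp add: real_sqrt_mult)
  then have "ennreal (c * sqrt x) \<le> ennreal (d * sqrt y)" by (rule ennreal_leI)
  then show ?thesis using x y \<open>X \<noteq> \<infinity>\<close> False c d by (simp add: ennreal_mult)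
qed

lemma sqrt_less:
  fixes X :: ennreal
  assumes "X < ennreal (e^2)" "0 < e"
  shows "(if X = \<infinity> then \<infinity> else ennreal (sqrt (enn2real X))) < ennreal e"
proof -
  have "X \<noteq> \<infinity>" using assms(1) by auto
  then obtain x where x: "0 \<le> x" "X = ennreal x" by (cases X) auto
  then have "x < e^2" using assms by (simp add: ennreal_less_iff)
  then have "sqrt x < sqrt (e^2)" by (rule real_sqrt_less_mono)
  then have "sqrt x < e" using assms(2) by simp
  then show ?thesis using x assms(2) by (simp add: ennreal_less_iff)
qed

lemma quad_facts:
  fixes A :: "real^'n^'n"
  assumes "sym_posdef A" "\<forall>l. is_eigenvalue A l \<longrightarrow> a \<le> l \<and> l \<le> g" "0 < a" "a \<le> 1"
  shows "a * (x \<bullet> (mpow A 0 *v x)) \<le> x \<bullet> (mpow A 1 *v x)"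
    and "a * (x \<bullet> (mpow A 1 *v x)) \<le> x \<bullet> (mpow A 2 *v x)"
    and "x \<bullet> (mpow A 2 *v x) \<le> g * (x \<bullet> (mpow A 1 *v x))"
    and "x \<bullet> (mpow A 1 *v x) \<le> g * (x \<bullet> (mpow A 0 *v x))"
    and "0 \<le> x \<bullet> (mpow A 0 *v x)" "0 \<le> x \<bullet> (mpow A 1 *v x)" "0 \<le> x \<bullet> (mpow A 2 *v x)"
    and "a \<le> g"
proof -
  have sym: "transpose A = A" using assms(1) by (simp add: sym_posdef_def)
  have ev: "\<And>l. is_eigenvalue A l \<Longrightarrow> a \<le> l \<and> l \<le> g" using assms(2) by blast
  note q = quad_ineqs[OF sym ev assms(3,4)]
  show "a * (x \<bullet> (mpow A 0 *v x)) \<le> x \<bullet> (mpow A 1 *v x)" using q(5) by simp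
  show "a * (x \<bullet> (mpow A 1 *v x)) \<le> x \<bullet> (mpow A 2 *v x)" using q(6) by (simp add: mpow_2)
  show "x \<bullet> (mpow A 2 *v x) \<le> g * (x \<bullet> (mpow A 1 *v x))" using q(3) by (simp add: mpow_2)
  show "x \<bullet> (mpow A 1 *v x) \<le> g * (x \<bullet> (mpow A 0 *v x))" using q(7) by simp
  show "0 \<le> x \<bullet> (mpow A 0 *v x)" by simp
  show "0 \<le> x \<bullet> (mpow A 1 *v x)" using q(8) by simp
  show "0 \<le> x \<bullet> (mpow A 2 *v x)" using q(8) q(6) assms(3) mpow_2[of A]
    by (smt (verit) mult_nonneg_nonneg)
  obtain k :: 'n where True by simp
  let ?e = "axis k (1::real)"
  have e1: "?e \<bullet> ?e = 1" by (simp add: inner_axis_axis)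
  have "a * (?e \<bullet> ?e) \<le> g * (?e \<bullet> ?e)" using q(5)[of ?e] q(7)[of ?e] by linarith
  then show "a \<le> g" using e1 by simp
qed

context setting
begin

lemma inner_step:
  assumes Gm: "(\<lambda>(x, w). G x w) \<in> borel_measurable (lborel \<Otimes>\<^sub>M Gam)" and w: "w \<in> space Gam"
    and cd: "0 \<le> c" "0 \<le> d"
    and pt: "AE x in lborel. x \<in> D \<longrightarrow> c * (G x w \<bullet> (mpow (C x w) r *v G x w)) \<le> d * (G x w \<bullet> (mpow (C x w) r' *v G x w))
                 \<and> 0 \<le> G x w \<bullet> (mpow (C x w) r' *v G x w)"
  shows "ennreal c * QG D C G r w \<le> ennreal d * QG D C G r' w"
  unfolding QG_def
proof (rule nn_scale_mono[OF inner_meas[OF Gm w] inner_meas[OF Gm w]])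
  show "AE x in lborel. ennreal c * (ennreal (G x w \<bullet> (mpow (C x w) r *v G x w)) * indicator D x)
      \<le> ennreal d * (ennreal (G x w \<bullet> (mpow (C x w) r' *v G x w)) * indicator D x)"
    using pt
  proof (rule AE_mp, intro AE_I2 impI)
    fix x assume h: "x \<in> D \<longrightarrow> c * (G x w \<bullet> (mpow (C x w) r *v G x w)) \<le> d * (G x w \<bullet> (mpow (C x w) r' *v G x w))
                 \<and> 0 \<le> G x w \<bullet> (mpow (C x w) r' *v G x w)"
    show "ennreal c * (ennreal (G x w \<bullet> (mpow (C x w) r *v G x w)) * indicator D x)
      \<le> ennreal d * (ennreal (G x w \<bullet> (mpow (C x w) r' *v G x w)) * indicator D x)"
    proof (cases "x \<in> D")
      case True
      with h have "ennreal c * ennreal (G x w \<bullet> (mpow (C x w) r *v G x w))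
          \<le> ennreal d * ennreal (G x w \<bullet> (mpow (C x w) r' *v G x w))"
        using cd by (intro ennreal_scale_le) auto
      then show ?thesis using True by simp
    qed simp
  qed
qed

lemma gam_s_meas: "(\<lambda>w. ennreal (gam w ^ s)) \<in> borel_measurable Gam"
  using gm by measurable

lemma outer_step:
  assumes Gm: "(\<lambda>(x, w). G x w) \<in> borel_measurable (lborel \<Otimes>\<^sub>M Gam)"
    and H: "AE w in Gam. H1 D (\<lambda>x. v x w) (\<lambda>x. G x w)"
    and pt: "AE w in Gam. c * (ennreal (gam w ^ s) * QG D C G r w) \<le> d * (ennreal (gam w ^ s') * QG D C G r' w)"
  shows "c * Xsq D Gam C gam s r v \<le> d * Xsq D Gam C gam s' r' v"
  unfolding Xsq_G[OF H]
  by (rule nn_scale_mono[OF borel_measurable_times_ennreal[OF gam_s_meas QG_meas[OF Gm]]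
        borel_measurable_times_ennreal[OF gam_s_meas QG_meas[OF Gm]] pt])

lemma ev': "AE w in Gam. w \<in> space Gam \<and> (AE x in lborel. x \<in> D \<longrightarrow>
           sym_posdef (C x w) \<and> (\<forall>l. is_eigenvalue (C x w) l \<longrightarrow> alpha \<le> l \<and> l \<le> gam w))"
  using ev by (rule AE_mp) (auto intro!: AE_I2)

lemma chain:
  assumes Gm: "(\<lambda>(x, w). G x w) \<in> borel_measurable (lborel \<Otimes>\<^sub>M Gam)"
    and H: "AE w in Gam. H1 D (\<lambda>x. v x w) (\<lambda>x. G x w)"
  shows "ennreal (alpha^3) * Xsq D Gam C gam 0 0 v \<le> ennreal (alpha^2) * Xsq D Gam C gam 0 1 v"
    and "ennreal (alpha^2) * Xsq D Gam C gam 0 1 v \<le> ennreal (1^2) * Xsq D Gam C gam 0 2 v"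
    and "ennreal (1^2) * Xsq D Gam C gam 0 2 v \<le> ennreal (1^2) * Xsq D Gam C gam 1 1 v"
    and "ennreal (1^2) * Xsq D Gam C gam 1 1 v \<le> ennreal (1^2) * Xsq D Gam C gam 2 0 v"
proof -
  let ?E = "\<lambda>r x w. G x w \<bullet> (mpow (C x w) r *v G x w)"
  have step: "AE w in Gam. ennreal c0 * (ennreal (gam w ^ s) * QG D C G r w) \<le> ennreal d0 * (ennreal (gam w ^ s') * QG D C G r' w)"
    if cd: "\<And>w. 0 \<le> c0 * gam w ^ s" "\<And>w. 0 \<le> d0 * gam w ^ s'"
    and pt: "\<And>(A::real^'d^'d) g (x::real^'d). sym_posdef A \<Longrightarrow> (\<forall>l. is_eigenvalue A l \<longrightarrow> alpha \<le> l \<and> l \<le> g) \<Longrightarrow> 0 < g \<Longrightarrow>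
         (c0 * g ^ s) * (x \<bullet> (mpow A r *v x)) \<le> (d0 * g ^ s') * (x \<bullet> (mpow A r' *v x))
         \<and> 0 \<le> x \<bullet> (mpow A r' *v x)"
    for c0 d0 s s' r r'
    using ev'
  proof (rule AE_mp, intro AE_I2 impI)
    fix w assume hw: "w \<in> space Gam \<and> (AE x in lborel. x \<in> D \<longrightarrow>
           sym_posdef (C x w) \<and> (\<forall>l. is_eigenvalue (C x w) l \<longrightarrow> alpha \<le> l \<and> l \<le> gam w))"
    have "ennreal (c0 * gam w ^ s) * QG D C G r w \<le> ennreal (d0 * gam w ^ s') * QG D C G r' w"
    proof (rule inner_step[OF Gm _ cd])
      show "w \<in> space Gam" using hw by simp
      show "AE x in lborel. x \<in> D \<longrightarrow> (c0 * gam w ^ s) * ?E r x w \<le> (d0 * gam w ^ s') * ?E r' x w \<and> 0 \<le> ?E r' x w"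
        using hw[THEN conjunct2]
      proof (rule AE_mp, intro AE_I2 impI)
        fix x assume "x \<in> D \<longrightarrow> sym_posdef (C x w) \<and> (\<forall>l. is_eigenvalue (C x w) l \<longrightarrow> alpha \<le> l \<and> l \<le> gam w)"
          and "x \<in> D"
        then show "(c0 * gam w ^ s) * ?E r x w \<le> (d0 * gam w ^ s') * ?E r' x w \<and> 0 \<le> ?E r' x w"
          using pt[of "C x w" "gam w" "G x w"] gpos by blast
      qed
    qed
    moreover have "ennreal (c0 * gam w ^ s) = ennreal c0 * ennreal (gam w ^ s)"
      by (rule ennreal_mult''[OF zero_le_power[OF less_imp_le[OF gpos[rule_format]]]])
    moreover have "ennreal (d0 * gam w ^ s') = ennreal d0 * ennreal (gam w ^ s')"
      by (rule ennreal_mult''[OF zero_le_power[OF less_imp_le[OF gpos[rule_format]]]])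
    ultimately show "ennreal c0 * (ennreal (gam w ^ s) * QG D C G r w) \<le> ennreal d0 * (ennreal (gam w ^ s') * QG D C G r' w)"
      by (simp add: mult.assoc)
  qed
  note qf = quad_facts[OF _ _ a]
  show "ennreal (alpha^3) * Xsq D Gam C gam 0 0 v \<le> ennreal (alpha^2) * Xsq D Gam C gam 0 1 v"
  proof (rule outer_step[OF Gm H step])
    show "0 \<le> alpha ^ 3 * gam w ^ 0" "0 \<le> alpha ^ 2 * gam w ^ 0" for w using a by auto
    fix A g x assume h: "sym_posdef A" "\<forall>l. is_eigenvalue A l \<longrightarrow> alpha \<le> l \<and> l \<le> g" "0 < g"
    have "alpha^3 * (x \<bullet> (mpow A 0 *v x)) \<le> alpha^2 * (x \<bullet> (mpow A 1 *v x))"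
      using mult_left_mono[OF qf(1)[OF h(1,2), of x], of "alpha^2"] a
      by (simp add: power3_eq_cube power2_eq_square mult.assoc)
    then show "alpha ^ 3 * g ^ 0 * (x \<bullet> (mpow A 0 *v x)) \<le> alpha ^ 2 * g ^ 0 * (x \<bullet> (mpow A 1 *v x))
         \<and> 0 \<le> x \<bullet> (mpow A 1 *v x)" using qf(6)[OF h(1,2)] by simp
  qed
  show "ennreal (alpha^2) * Xsq D Gam C gam 0 1 v \<le> ennreal (1^2) * Xsq D Gam C gam 0 2 v"
  proof (rule outer_step[OF Gm H step])
    show "0 \<le> alpha ^ 2 * gam w ^ 0" "0 \<le> 1^2 * gam w ^ 0" for w using a by auto
    fix A g x assume h: "sym_posdef A" "\<forall>l. is_eigenvalue A l \<longrightarrow> alpha \<le> l \<and> l \<le> g" "0 < g"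
    have "alpha^2 * (x \<bullet> (mpow A 1 *v x)) \<le> alpha * (x \<bullet> (mpow A 1 *v x))"
      using qf(6)[OF h(1,2), of x] a by (simp add: power2_eq_square mult_right_le_one_le mult_le_cancel_right1 mult_right_mono)
    then show "alpha ^ 2 * g ^ 0 * (x \<bullet> (mpow A 1 *v x)) \<le> 1^2 * g ^ 0 * (x \<bullet> (mpow A 2 *v x))
         \<and> 0 \<le> x \<bullet> (mpow A 2 *v x)" using qf(2,7)[OF h(1,2), of x] by simp
  qed
  show "ennreal (1^2) * Xsq D Gam C gam 0 2 v \<le> ennreal (1^2) * Xsq D Gam C gam 1 1 v"
  proof (rule outer_step[OF Gm H step])
    show "0 \<le> 1^2 * gam w ^ 0" "0 \<le> 1^2 * gam w ^ 1" for w using gpos by (auto intro: less_imp_le)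
    fix A g x assume h: "sym_posdef A" "\<forall>l. is_eigenvalue A l \<longrightarrow> alpha \<le> l \<and> l \<le> g" "0 < g"
    show "1^2 * g ^ 0 * (x \<bullet> (mpow A 2 *v x)) \<le> 1^2 * g ^ 1 * (x \<bullet> (mpow A 1 *v x))
         \<and> 0 \<le> x \<bullet> (mpow A 1 *v x)" using qf(3,6)[OF h(1,2), of x] by simp
  qed
  show "ennreal (1^2) * Xsq D Gam C gam 1 1 v \<le> ennreal (1^2) * Xsq D Gam C gam 2 0 v"
  proof (rule outer_step[OF Gm H step])
    show "0 \<le> 1^2 * gam w ^ 1" "0 \<le> 1^2 * gam w ^ 2" for w using gpos by (auto intro: less_imp_le)
    fix A g x assume h: "sym_posdef A" "\<forall>l. is_eigenvalue A l \<longrightarrow> alpha \<le> l \<and> l \<le> g" "0 < g"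
    have "g * (x \<bullet> (mpow A 1 *v x)) \<le> g * (g * (x \<bullet> (mpow A 0 *v x)))"
      using qf(4)[OF h(1,2), of x] h(3) by (simp add: mult_left_mono)
    then show "1^2 * g ^ 1 * (x \<bullet> (mpow A 1 *v x)) \<le> 1^2 * g ^ 2 * (x \<bullet> (mpow A 0 *v x))
         \<and> 0 \<le> x \<bullet> (mpow A 0 *v x)" by (simp add: power2_eq_square mult.assoc)
  qed
qed

end

lemma zero_testfn: "testfn D (\<lambda>x. 0) (\<lambda>x. 0)"
  unfolding testfn_def by (simp add: GDERIV_const)

lemma zero_H1: "H1 D (\<lambda>x. 0) (\<lambda>x. 0)"
  unfolding H1_def weak_grad_def by (simp add: set_integrable_def set_lebesgue_integral_def)

lemma zero_H10: "H10 D (\<lambda>x. 0)"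
  unfolding H10_def
proof (intro exI conjI)
  show "H1 D (\<lambda>x. 0) (\<lambda>x. 0)" by (rule zero_H1)
  show "\<forall>k. testfn D ((\<lambda>k x. 0) k) ((\<lambda>k x. 0) k)" using zero_testfn by simp
  show "(\<lambda>k. LINT x:D|lborel. ((\<lambda>k x. 0) k x - 0)\<^sup>2 + (norm ((\<lambda>k x. 0) k x - (0::real^'a)))\<^sup>2) \<longlonglongrightarrow> 0"
    by (simp add: set_lebesgue_integral_def)
qed

lemma rA:
  fixes a g n e0 e1 :: real
  assumes "0 < a" "a \<le> 1" "0 < g" "g \<le> n" "a * e0 \<le> e1" "0 \<le> e0"
  shows "g^2 * e0 \<le> (n / a * g^1) * e1"
proof -
  have "e0 \<le> e1 / a" using assms by (simp add: pos_le_divide_eq mult.commute)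
  have "g * e0 \<le> n * e0" using assms by (simp add: mult_right_mono)
  also have "\<dots> \<le> n * (e1 / a)"
    using mult_left_mono[OF \<open>e0 \<le> e1 / a\<close>, of n] assms by linarith
  finally have le0: "g * e0 \<le> n * (e1 / a)" .
  have le: "g * (g * e0) \<le> g * (n * (e1 / a))" using mult_left_mono[OF le0, of g] assms by linarith
  have eq1: "g^2 * e0 = g * (g * e0)" by (simp add: power2_eq_square)
  have eq2: "(n / a * g^1) * e1 = g * (n * (e1 / a))" by simp
  show ?thesis using le by (simp only: eq1 eq2)
qed

lemma rB:
  fixes a g n e1 e2 :: real
  assumes "0 < a" "a \<le> 1" "0 < g" "g \<le> n" "a * e1 \<le> e2" "0 \<le> e1"
  shows "g^1 * e1 \<le> (n / a * g^0) * e2"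
proof -
  have "e1 \<le> e2 / a" using assms by (simp add: pos_le_divide_eq mult.commute)
  have "g * e1 \<le> n * e1" using assms by (simp add: mult_right_mono)
  also have "\<dots> \<le> n * (e2 / a)"
    using mult_left_mono[OF \<open>e1 \<le> e2 / a\<close>, of n] assms by linarith
  finally show ?thesis by simp
qed

lemma n_le_na:
  fixes a n :: real
  assumes "0 < a" "a \<le> 1" "0 \<le> n"
  shows "n \<le> n / a"
  using assms by (simp add: le_divide_eq mult_left_le)

lemma rC:
  fixes a g n e1 e2 :: real
  assumes "0 < a" "a \<le> 1" "0 < g" "g \<le> n" "e2 \<le> g * e1" "0 \<le> e1"
  shows "g^0 * e2 \<le> (n / a * g^0) * e1"
proof -
  have "e2 \<le> g * e1" by fact
  also have "\<dots> \<le> n * e1" using assms by (simp add: mult_right_mono)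
  also have "\<dots> \<le> (n / a) * e1"
  proof -
    have nle: "n \<le> n / a" using n_le_na[of a n] assms by simp
    show ?thesis by (rule mult_right_mono[OF nle assms(6)])
  qed
  finally show ?thesis by simp
qed

lemma rD:
  fixes a g n e0 e1 :: real
  assumes "0 < a" "a \<le> 1" "0 < g" "g \<le> n" "e1 \<le> g * e0" "0 \<le> e0"
  shows "g^0 * e1 \<le> (n / a * g^0) * e0"
  using rC[OF assms] by simp

context setting
begin

lemma if_meas:
  fixes f g :: "real^'d \<Rightarrow> 'w \<Rightarrow> 'b::topological_space"
  assumes "(\<lambda>(x, w). f x w) \<in> borel_measurable (lborel \<Otimes>\<^sub>M Gam)" "(\<lambda>(x, w). g x w) \<in> borel_measurable (lborel \<Otimes>\<^sub>M Gam)"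
  shows "(\<lambda>(x, w). if gam w \<le> c then f x w else g x w) \<in> borel_measurable (lborel \<Otimes>\<^sub>M Gam)"
proof -
  have [measurable]: "(\<lambda>z. gam (snd z)) \<in> borel_measurable (lborel \<Otimes>\<^sub>M Gam)"
    using measurable_compose[OF measurable_snd gm] .
  have "{z \<in> space (lborel \<Otimes>\<^sub>M Gam). gam (snd z) \<le> c} \<in> sets (lborel \<Otimes>\<^sub>M Gam)" by measurable
  from measurable_If[OF assms this]
  have "(\<lambda>z. if gam (snd z) \<le> c then (case z of (x, w) \<Rightarrow> f x w) else (case z of (x, w) \<Rightarrow> g x w))
      \<in> borel_measurable (lborel \<Otimes>\<^sub>M Gam)" .
  moreover have "(\<lambda>z. if gam (snd z) \<le> c then (case z of (x, w) \<Rightarrow> f x w) else (case z of (x, w) \<Rightarrow> g x w))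
      = (\<lambda>(x, w). if gam w \<le> c then f x w else g x w)" by (auto simp: fun_eq_iff)
  ultimately show ?thesis by simp
qed

lemma zero_meas: "(\<lambda>(x, w). 0::'b::{topological_space,zero}) \<in> borel_measurable (lborel \<Otimes>\<^sub>M Gam)"
  by (simp add: case_prod_beta)

lemma ind_meas: "(\<lambda>w. indicator {w. c < gam w} w :: ennreal) \<in> borel_measurable Gam"
  using gm by measurable

lemma dense:
  assumes pt: "\<And>(A::real^'d^'d) g (x::real^'d) (n::nat). sym_posdef A \<Longrightarrow>
      (\<forall>l. is_eigenvalue A l \<longrightarrow> alpha \<le> l \<and> l \<le> g) \<Longrightarrow> 0 < g \<Longrightarrow> g \<le> real n \<Longrightarrow>
      g^s' * (x \<bullet> (mpow A r' *v x)) \<le> (real n / alpha * g^s) * (x \<bullet> (mpow A r *v x))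
      \<and> 0 \<le> x \<bullet> (mpow A r *v x)"
    and incl: "Xspace D Gam C gam s' r' \<subseteq> Xspace D Gam C gam s r"
  shows "dense_embedded D Gam C gam (Xspace D Gam C gam s' r') s r"
  unfolding dense_embedded_def
proof (intro conjI ballI allI impI)
  show "Xspace D Gam C gam s' r' \<subseteq> Xspace D Gam C gam s r" by (rule incl)
  fix v and e :: real assume v: "v \<in> Xspace D Gam C gam s r" and e: "0 < e"
  from v have adm: "admissible D Gam v" and fin: "Xnorm D Gam C gam s r v < \<infinity>"
    by (auto simp: Xspace_def)
  from adm obtain G where vm: "(\<lambda>(x, w). v x w) \<in> borel_measurable (lborel \<Otimes>\<^sub>M Gam)"
    and Gm: "(\<lambda>(x, w). G x w) \<in> borel_measurable (lborel \<Otimes>\<^sub>M Gam)"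
    and HG: "AE w in Gam. H10 D (\<lambda>x. v x w) \<and> H1 D (\<lambda>x. v x w) (\<lambda>x. G x w)"
    unfolding admissible_def by blast
  have H: "AE w in Gam. H1 D (\<lambda>x. v x w) (\<lambda>x. G x w)"
    using HG by (rule AE_mp) (auto intro!: AE_I2)
  have Xfin: "Xsq D Gam C gam s r v < \<infinity>"
    using fin by (auto simp: Xnorm_def less_top split: if_splits)
  define u where "u n x w = (if gam w \<le> real n then v x w else 0)" for n :: nat and x w
  define Gu where "Gu n x w = (if gam w \<le> real n then G x w else 0)" for n :: nat and x w
  define Gd where "Gd n x w = (if gam w \<le> real n then 0 else G x w)" for n :: nat and x w
  have um: "(\<lambda>(x, w). u n x w) \<in> borel_measurable (lborel \<Otimes>\<^sub>M Gam)" for n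
    unfolding u_def by (rule if_meas[OF vm zero_meas])
  have Gum: "(\<lambda>(x, w). Gu n x w) \<in> borel_measurable (lborel \<Otimes>\<^sub>M Gam)" for n
    unfolding Gu_def by (rule if_meas[OF Gm zero_meas])
  have Gdm: "(\<lambda>(x, w). Gd n x w) \<in> borel_measurable (lborel \<Otimes>\<^sub>M Gam)" for n
    unfolding Gd_def by (rule if_meas[OF zero_meas Gm])
  have Hu: "AE w in Gam. H10 D (\<lambda>x. u n x w) \<and> H1 D (\<lambda>x. u n x w) (\<lambda>x. Gu n x w)" for n
    using HG
  proof (rule AE_mp, intro AE_I2 impI)
    fix w assume hw: "H10 D (\<lambda>x. v x w) \<and> H1 D (\<lambda>x. v x w) (\<lambda>x. G x w)"
    show "H10 D (\<lambda>x. u n x w) \<and> H1 D (\<lambda>x. u n x w) (\<lambda>x. Gu n x w)"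
    proof (cases "gam w \<le> real n")
      case True then show ?thesis using hw by (simp add: u_def Gu_def)
    next
      case False then show ?thesis by (simp add: u_def Gu_def zero_H1 zero_H10)
    qed
  qed
  have Hu': "AE w in Gam. H1 D (\<lambda>x. u n x w) (\<lambda>x. Gu n x w)" for n
    using Hu[of n] by (rule AE_mp) (auto intro!: AE_I2)
  have Hd: "AE w in Gam. H1 D (\<lambda>x. v x w - u n x w) (\<lambda>x. Gd n x w)" for n
    using H
  proof (rule AE_mp, intro AE_I2 impI)
    fix w assume hw: "H1 D (\<lambda>x. v x w) (\<lambda>x. G x w)"
    show "H1 D (\<lambda>x. v x w - u n x w) (\<lambda>x. Gd n x w)"
    proof (cases "gam w \<le> real n")
      case True then show ?thesis by (simp add: u_def Gd_def zero_H1)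
    next
      case False then show ?thesis using hw by (simp add: u_def Gd_def)
    qed
  qed
  have QGu: "QG D C (Gu n) r' w = QG D C G r' w * indicator {w. gam w \<le> real n} w" for n w
    by (cases "gam w \<le> real n") (simp_all add: QG_def Gu_def)
  have QGd: "QG D C (Gd n) r w = QG D C G r w * indicator {w. real n < gam w} w" for n w
    by (cases "gam w \<le> real n") (simp_all add: QG_def Gd_def)
  have uX: "u n \<in> Xspace D Gam C gam s' r'" for n
  proof -
    have "admissible D Gam (u n)" unfolding admissible_def using um Gum Hu by blast
    moreover have "Xsq D Gam C gam s' r' (u n) < \<infinity>"
    proof -
      have "1 * Xsq D Gam C gam s' r' (u n) \<le> ennreal (real n / alpha) * Xsq D Gam C gam s r v"
        unfolding Xsq_G[OF Hu'] Xsq_G[OF H]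
      proof (rule nn_scale_mono[OF borel_measurable_times_ennreal[OF gam_s_meas QG_meas[OF Gum]]
            borel_measurable_times_ennreal[OF gam_s_meas QG_meas[OF Gm]]])
        show "AE w in Gam. 1 * (ennreal (gam w ^ s') * QG D C (Gu n) r' w)
            \<le> ennreal (real n / alpha) * (ennreal (gam w ^ s) * QG D C G r w)"
          using ev'
        proof (rule AE_mp, intro AE_I2 impI)
          fix w assume hw: "w \<in> space Gam \<and> (AE x in lborel. x \<in> D \<longrightarrow>
             sym_posdef (C x w) \<and> (\<forall>l. is_eigenvalue (C x w) l \<longrightarrow> alpha \<le> l \<and> l \<le> gam w))"
          show "1 * (ennreal (gam w ^ s') * QG D C (Gu n) r' w)
            \<le> ennreal (real n / alpha) * (ennreal (gam w ^ s) * QG D C G r w)"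
          proof (cases "gam w \<le> real n")
            case True
            have g0: "0 < gam w" using gpos by simp
            have "ennreal (gam w ^ s') * QG D C G r' w \<le> ennreal (real n / alpha * gam w ^ s) * QG D C G r w"
            proof (rule inner_step[OF Gm])
              show "w \<in> space Gam" using hw by simp
              show "0 \<le> gam w ^ s'" using g0 by simp
              show "0 \<le> real n / alpha * gam w ^ s" using g0 a by simp
              show "AE x in lborel. x \<in> D \<longrightarrow> gam w ^ s' * (G x w \<bullet> (mpow (C x w) r' *v G x w))
                  \<le> (real n / alpha * gam w ^ s) * (G x w \<bullet> (mpow (C x w) r *v G x w))
                  \<and> 0 \<le> G x w \<bullet> (mpow (C x w) r *v G x w)"
                using hw[THEN conjunct2]
              proof (rule AE_mp, intro AE_I2 impI)
                fix x assume "x \<in> D \<longrightarrow> sym_posdef (C x w) \<and> (\<forall>l. is_eigenvalue (C x w) l \<longrightarrow> alpha \<le> l \<and> l \<le> gam w)"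
                  and "x \<in> D"
                then show "gam w ^ s' * (G x w \<bullet> (mpow (C x w) r' *v G x w))
                  \<le> (real n / alpha * gam w ^ s) * (G x w \<bullet> (mpow (C x w) r *v G x w))
                  \<and> 0 \<le> G x w \<bullet> (mpow (C x w) r *v G x w)"
                  using pt[of "C x w" "gam w" n "G x w"] g0 True by blast
              qed
            qed
            moreover have "ennreal (real n / alpha * gam w ^ s) = ennreal (real n / alpha) * ennreal (gam w ^ s)"
              by (rule ennreal_mult) (use g0 a in simp_all)
            ultimately show ?thesis using True by (simp add: QGu mult.assoc)
          next
            case False then show ?thesis by (simp add: QGu)
          qed
        qed
      qed
      moreover have "ennreal (real n / alpha) * Xsq D Gam C gam s r v < \<infinity>"
        using Xfin by (simp add: ennreal_mult_less_top)
      ultimately show ?thesis by simp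
    qed
    ultimately show ?thesis by (simp add: Xspace_def Xnorm_def)
  qed
  define f where "f n w = ennreal (gam w ^ s) * QG D C G r w * indicator {w. real n < gam w} w" for n :: nat and w
  have Xd: "Xsq D Gam C gam s r (\<lambda>x w. v x w - u n x w) = (\<integral>\<^sup>+w. f n w \<partial>Gam)" for n
    unfolding Xsq_G[OF Hd] f_def QGd by (simp add: mult.assoc)
  have fm: "f n \<in> borel_measurable Gam" for n
    unfolding f_def
    by (rule borel_measurable_times_ennreal[OF borel_measurable_times_ennreal[OF gam_s_meas QG_meas[OF Gm]] ind_meas])
  have dec: "decseq f"
  proof (rule decseq_SucI, rule le_funI)
    fix n :: nat and w
    have "indicator {w. real (Suc n) < gam w} w \<le> (indicator {w. real n < gam w} w :: ennreal)"
      by (auto simp: indicator_def)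
    then show "f (Suc n) w \<le> f n w" unfolding f_def by (rule mult_left_mono) simp
  qed
  have f0: "(\<integral>\<^sup>+w. f 0 w \<partial>Gam) < \<infinity>"
  proof -
    have "(\<integral>\<^sup>+w. f 0 w \<partial>Gam) \<le> (\<integral>\<^sup>+w. ennreal (gam w ^ s) * QG D C G r w \<partial>Gam)"
      unfolding f_def by (intro nn_integral_mono) (auto simp: indicator_def)
    also have "\<dots> = Xsq D Gam C gam s r v" by (rule Xsq_G[OF H, symmetric])
    finally show ?thesis using Xfin by simp
  qed
  have "(\<integral>\<^sup>+w. (INF n. f n w) \<partial>Gam) = (INF n. \<integral>\<^sup>+w. f n w \<partial>Gam)"
    by (rule nn_integral_monotone_convergence_INF_decseq[OF dec fm f0])
  moreover have "(INF n. f n w) = 0" for w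
  proof -
    obtain N :: nat where N: "gam w \<le> real N" using real_arch_simple by blast
    then have "f N w = 0" by (simp add: f_def)
    then have "(INF n. f n w) \<le> 0" by (metis INF_lower UNIV_I)
    then show ?thesis by simp
  qed
  ultimately have "(INF n. \<integral>\<^sup>+w. f n w \<partial>Gam) = 0" by simp
  then have "(INF n. \<integral>\<^sup>+w. f n w \<partial>Gam) < ennreal (e^2)" using e by simp
  then obtain n where n: "(\<integral>\<^sup>+w. f n w \<partial>Gam) < ennreal (e^2)" by (auto simp: INF_less_iff)
  have "Xnorm D Gam C gam s r (\<lambda>x w. v x w - u n x w) < ennreal e"
    unfolding Xnorm_def using sqrt_less[OF n[folded Xd] e] .
  then show "\<exists>u\<in>Xspace D Gam C gam s' r'. Xnorm D Gam C gam s r (\<lambda>x w. v x w - u x w) < ennreal e"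
    using uX[of n] by blast
qed

end

theorem lemma8:
  fixes D :: "(real^'d) set"
    and Gam1 :: "'g::euclidean_space measure" and Gam2 :: "'n::euclidean_space measure"
    and C :: "real^'d \<Rightarrow> ('g \<times> 'n) \<Rightarrow> real^'d^'d"
    and gam :: "('g \<times> 'n) \<Rightarrow> real"
    and alpha :: real
  defines "Gam \<equiv> Gam1 \<Otimes>\<^sub>M Gam2"
  assumes "bounded D" and "open D"
    and "prob_space Gam1" and "sets Gam1 = sets borel"
    and "prob_space Gam2" and "sets Gam2 = sets borel"
    and "(\<lambda>(x, w). C x w) \<in> borel_measurable (lborel \<Otimes>\<^sub>M Gam)"
    and "gam \<in> borel_measurable Gam" and "\<forall>w. gam w > 0"
    and "alpha > 0" and "alpha \<le> 1"
    and "AE w in Gam. AE x in lborel. x \<in> D \<longrightarrow>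
           sym_posdef (C x w) \<and>
           (\<forall>l. is_eigenvalue (C x w) l \<longrightarrow> alpha \<le> l \<and> l \<le> gam w)"
  shows "(\<forall>v. admissible D Gam v \<longrightarrow>
            ennreal (alpha powr (3/2)) * Xnorm D Gam C gam 0 0 v \<le> ennreal alpha * Xnorm D Gam C gam 0 1 v
          \<and> ennreal alpha * Xnorm D Gam C gam 0 1 v \<le> Xnorm D Gam C gam 0 2 v
          \<and> Xnorm D Gam C gam 0 2 v \<le> Xnorm D Gam C gam 1 1 v
          \<and> Xnorm D Gam C gam 1 1 v \<le> Xnorm D Gam C gam 2 0 v)
       \<and> dense_embedded D Gam C gam (Xspace D Gam C gam 2 0) 1 1
       \<and> dense_embedded D Gam C gam (Xspace D Gam C gam 1 1) 0 2
       \<and> dense_embedded D Gam C gam (Xspace D Gam C gam 0 2) 0 1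
       \<and> dense_embedded D Gam C gam (Xspace D Gam C gam 0 1) 0 0"
proof -
  interpret S: setting D Gam C gam alpha
  proof unfold_locales
    show "open D" using assms by blast
    show "bounded D" using assms by blast
    show "(\<lambda>(x, w). C x w) \<in> borel_measurable (lborel \<Otimes>\<^sub>M Gam)" using assms by blast
    show "gam \<in> borel_measurable Gam" using assms by blast
    show "\<forall>w. 0 < gam w" using assms by blast
    show "0 < alpha" using assms by blast
    show "alpha \<le> 1" using assms by blast
    show "AE w in Gam. AE x in lborel. x \<in> D \<longrightarrow>
           sym_posdef (C x w) \<and> (\<forall>l. is_eigenvalue (C x w) l \<longrightarrow> alpha \<le> l \<and> l \<le> gam w)"
      using assms by blast
  qed
  have a: "0 < alpha" "alpha \<le> 1" using assms by auto
  have pw: "(alpha powr (3/2))^2 = alpha^3"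
  proof -
    have "(alpha powr (3/2))^2 = alpha powr (3/2) * alpha powr (3/2)" by (simp add: power2_eq_square)
    also have "\<dots> = alpha powr (3/2 + 3/2)" by (rule powr_add[symmetric])
    also have "\<dots> = alpha powr 3" by simp
    also have "\<dots> = alpha^3" using a by simp
    finally show ?thesis .
  qed
  have ineq: "\<forall>v. admissible D Gam v \<longrightarrow>
            ennreal (alpha powr (3/2)) * Xnorm D Gam C gam 0 0 v \<le> ennreal alpha * Xnorm D Gam C gam 0 1 v
          \<and> ennreal alpha * Xnorm D Gam C gam 0 1 v \<le> Xnorm D Gam C gam 0 2 v
          \<and> Xnorm D Gam C gam 0 2 v \<le> Xnorm D Gam C gam 1 1 v
          \<and> Xnorm D Gam C gam 1 1 v \<le> Xnorm D Gam C gam 2 0 v"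
  proof (intro allI impI)
    fix v assume "admissible D Gam v"
    then obtain G where Gm: "(\<lambda>(x, w). G x w) \<in> borel_measurable (lborel \<Otimes>\<^sub>M Gam)"
      and HG: "AE w in Gam. H10 D (\<lambda>x. v x w) \<and> H1 D (\<lambda>x. v x w) (\<lambda>x. G x w)"
      unfolding admissible_def by blast
    have H: "AE w in Gam. H1 D (\<lambda>x. v x w) (\<lambda>x. G x w)"
      using HG by (rule AE_mp) (auto intro!: AE_I2)
    note ch = S.chain[OF Gm H]
    have c1: "ennreal ((alpha powr (3/2))^2) * Xsq D Gam C gam 0 0 v \<le> ennreal (alpha^2) * Xsq D Gam C gam 0 1 v"
      using ch(1) by (simp only: pw)
    have "ennreal (alpha powr (3/2)) * Xnorm D Gam C gam 0 0 v \<le> ennreal alpha * Xnorm D Gam C gam 0 1 v"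
      unfolding Xnorm_def by (rule sqrt_conv[OF c1]) (use a in simp_all)
    moreover have "ennreal alpha * Xnorm D Gam C gam 0 1 v \<le> ennreal 1 * Xnorm D Gam C gam 0 2 v"
      unfolding Xnorm_def by (rule sqrt_conv[OF ch(2)]) (use a in simp_all)
    moreover have "ennreal 1 * Xnorm D Gam C gam 0 2 v \<le> ennreal 1 * Xnorm D Gam C gam 1 1 v"
      unfolding Xnorm_def by (rule sqrt_conv[OF ch(3)]) simp_all
    moreover have "ennreal 1 * Xnorm D Gam C gam 1 1 v \<le> ennreal 1 * Xnorm D Gam C gam 2 0 v"
      unfolding Xnorm_def by (rule sqrt_conv[OF ch(4)]) simp_all
    ultimately show "ennreal (alpha powr (3/2)) * Xnorm D Gam C gam 0 0 v \<le> ennreal alpha * Xnorm D Gam C gam 0 1 v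
          \<and> ennreal alpha * Xnorm D Gam C gam 0 1 v \<le> Xnorm D Gam C gam 0 2 v
          \<and> Xnorm D Gam C gam 0 2 v \<le> Xnorm D Gam C gam 1 1 v
          \<and> Xnorm D Gam C gam 1 1 v \<le> Xnorm D Gam C gam 2 0 v" by simp
  qed
  have incl1: "Xspace D Gam C gam 2 0 \<subseteq> Xspace D Gam C gam 1 1"
    using ineq by (auto simp: Xspace_def intro: le_less_trans)
  have incl2: "Xspace D Gam C gam 1 1 \<subseteq> Xspace D Gam C gam 0 2"
    using ineq by (auto simp: Xspace_def intro: le_less_trans)
  have incl3: "Xspace D Gam C gam 0 2 \<subseteq> Xspace D Gam C gam 0 1"
  proof
    fix v assume "v \<in> Xspace D Gam C gam 0 2"
    then have adm: "admissible D Gam v" and f: "Xnorm D Gam C gam 0 2 v < \<infinity>" by (auto simp: Xspace_def)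
    have "ennreal alpha * Xnorm D Gam C gam 0 1 v < \<infinity>" using ineq adm f by (meson le_less_trans)
    then have "Xnorm D Gam C gam 0 1 v < \<infinity>" using a by (auto simp: ennreal_mult_less_top)
    then show "v \<in> Xspace D Gam C gam 0 1" using adm by (simp add: Xspace_def)
  qed
  have incl4: "Xspace D Gam C gam 0 1 \<subseteq> Xspace D Gam C gam 0 0"
  proof
    fix v assume "v \<in> Xspace D Gam C gam 0 1"
    then have adm: "admissible D Gam v" and f: "Xnorm D Gam C gam 0 1 v < \<infinity>" by (auto simp: Xspace_def)
    have "ennreal alpha * Xnorm D Gam C gam 0 1 v < \<infinity>" using f by (simp add: ennreal_mult_less_top)
    then have "ennreal (alpha powr (3/2)) * Xnorm D Gam C gam 0 0 v < \<infinity>" using ineq adm by (meson le_less_trans)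
    then have "Xnorm D Gam C gam 0 0 v < \<infinity>" using a by (auto simp: ennreal_mult_less_top)
    then show "v \<in> Xspace D Gam C gam 0 0" using adm by (simp add: Xspace_def)
  qed
  note qf = quad_facts[OF _ _ a]
  have d1: "dense_embedded D Gam C gam (Xspace D Gam C gam 2 0) 1 1"
  proof (rule S.dense[OF _ incl1])
    fix A :: "real^'d^'d" and g and x :: "real^'d" and n :: nat
    assume h: "sym_posdef A" "\<forall>l. is_eigenvalue A l \<longrightarrow> alpha \<le> l \<and> l \<le> g" "0 < g" "g \<le> real n"
    show "g^2 * (x \<bullet> (mpow A 0 *v x)) \<le> (real n / alpha * g^1) * (x \<bullet> (mpow A 1 *v x))
        \<and> 0 \<le> x \<bullet> (mpow A 1 *v x)"
      using rA[OF a h(3,4) qf(1)[OF h(1,2)] qf(5)[OF h(1,2)]] qf(6)[OF h(1,2)] by blast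
  qed
  have d2: "dense_embedded D Gam C gam (Xspace D Gam C gam 1 1) 0 2"
  proof (rule S.dense[OF _ incl2])
    fix A :: "real^'d^'d" and g and x :: "real^'d" and n :: nat
    assume h: "sym_posdef A" "\<forall>l. is_eigenvalue A l \<longrightarrow> alpha \<le> l \<and> l \<le> g" "0 < g" "g \<le> real n"
    show "g^1 * (x \<bullet> (mpow A 1 *v x)) \<le> (real n / alpha * g^0) * (x \<bullet> (mpow A 2 *v x))
        \<and> 0 \<le> x \<bullet> (mpow A 2 *v x)"
      using rB[OF a h(3,4) qf(2)[OF h(1,2)] qf(6)[OF h(1,2)]] qf(7)[OF h(1,2)] by blast
  qed
  have d3: "dense_embedded D Gam C gam (Xspace D Gam C gam 0 2) 0 1"
  proof (rule S.dense[OF _ incl3])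
    fix A :: "real^'d^'d" and g and x :: "real^'d" and n :: nat
    assume h: "sym_posdef A" "\<forall>l. is_eigenvalue A l \<longrightarrow> alpha \<le> l \<and> l \<le> g" "0 < g" "g \<le> real n"
    show "g^0 * (x \<bullet> (mpow A 2 *v x)) \<le> (real n / alpha * g^0) * (x \<bullet> (mpow A 1 *v x))
        \<and> 0 \<le> x \<bullet> (mpow A 1 *v x)"
      using rC[OF a h(3,4) qf(3)[OF h(1,2)] qf(6)[OF h(1,2)]] qf(6)[OF h(1,2)] by blast
  qed
  have d4: "dense_embedded D Gam C gam (Xspace D Gam C gam 0 1) 0 0"
  proof (rule S.dense[OF _ incl4])
    fix A :: "real^'d^'d" and g and x :: "real^'d" and n :: nat
    assume h: "sym_posdef A" "\<forall>l. is_eigenvalue A l \<longrightarrow> alpha \<le> l \<and> l \<le> g" "0 < g" "g \<le> real n"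
    show "g^0 * (x \<bullet> (mpow A 1 *v x)) \<le> (real n / alpha * g^0) * (x \<bullet> (mpow A 0 *v x))
        \<and> 0 \<le> x \<bullet> (mpow A 0 *v x)"
      using rD[OF a h(3,4) qf(4)[OF h(1,2)] qf(5)[OF h(1,2)]] qf(5)[OF h(1,2)] by blast
  qed
  show ?thesis using ineq d1 d2 d3 d4 by blast
qed

end
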